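(* Let $T=\{(x,y)\in\mathbb{R}^2:x+y>0\}$ and let $M\colon T\to\mathbf{Vec}$ be pointwise finite-dimensional, middle exact and indecomposable. If there exist $x\le x'$, $y\le y'$ with $a=(x,y)$, $b=(x,y')$, $c=(x',y)$, $d=(x',y')$ all in $T$ such that $\ker M(a\le b)\cap\ker M(a\le c)\neq0$, then $M\cong k_{J\cap T}$ for some block $J\subseteq\mathbb{R}^2$ of type db.
   Context: $T$ has the product order from $\mathbb{R}^2$. Middle exact on $T$: for all such $a,b,c,d\in T$ the sequence $M_a\xrightarrow{(M(a\le b),M(a\le c))}M_b\oplus M_c\xrightarrow{M(b\le d)-M(c\le d)}M_d$ is exact at the middle. A block of type db in $\mathbb{R}^2$ is $J_1\times J_2$ with $J_1,J_2\subseteq\mathbb{R}$ non-empty downward-closed. $k_B$ is $k$ on $B$, $0$ elsewhere, identity maps within $B$ and zero otherwise. *)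

theory Defs
  imports Complex_Main
begin

definition pleq :: "real \<times> real \<Rightarrow> real \<times> real \<Rightarrow> bool" where
  "pleq p q \<longleftrightarrow> fst p \<le> fst q \<and> snd p \<le> snd q"

definition Tset :: "(real \<times> real) set" where
  "Tset = {p. fst p + snd p > 0}"

text \<open>A persistence module over an index set I is represented by a family of
  subspaces V t of an ambient vector space (over field 'k with scalar
  multiplication scale) together with maps F s t, linear on V s.\<close>

definition lin_on :: "('k \<Rightarrow> 'v \<Rightarrow> 'v) \<Rightarrow> ('k \<Rightarrow> 'w \<Rightarrow> 'w) \<Rightarrow> 'v set
    \<Rightarrow> ('v::ab_group_add \<Rightarrow> 'w::ab_group_add) \<Rightarrow> bool" where
  "lin_on s1 s2 A f \<longleftrightarrow>
     (\<forall>x\<in>A. \<forall>y\<in>A. f (x + y) = f x + f y) \<and> (\<forall>c. \<forall>x\<in>A. f (s1 c x) = s2 c (f x))"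

definition pmod :: "('k::field \<Rightarrow> 'v::ab_group_add \<Rightarrow> 'v) \<Rightarrow> (real \<times> real) set
    \<Rightarrow> (real \<times> real \<Rightarrow> 'v set) \<Rightarrow> (real \<times> real \<Rightarrow> real \<times> real \<Rightarrow> 'v \<Rightarrow> 'v) \<Rightarrow> bool" where
  "pmod scale I V F \<longleftrightarrow> vector_space scale \<and>
     (\<forall>t\<in>I. module.subspace scale (V t)) \<and>
     (\<forall>s\<in>I. \<forall>t\<in>I. pleq s t \<longrightarrow> lin_on scale scale (V s) (F s t) \<and> F s t ` V s \<subseteq> V t) \<and>
     (\<forall>t\<in>I. \<forall>x\<in>V t. F t t x = x) \<and>
     (\<forall>s\<in>I. \<forall>t\<in>I. \<forall>u\<in>I. pleq s t \<longrightarrow> pleq t u \<longrightarrow>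
        (\<forall>x\<in>V s. F s u x = F t u (F s t x)))"

definition pfd :: "('k::field \<Rightarrow> 'v::ab_group_add \<Rightarrow> 'v) \<Rightarrow> (real \<times> real) set
    \<Rightarrow> (real \<times> real \<Rightarrow> 'v set) \<Rightarrow> bool" where
  "pfd scale I V \<longleftrightarrow> (\<forall>t\<in>I. \<exists>B. finite B \<and> B \<subseteq> V t \<and> module.span scale B = V t)"

text \<open>Middle exactness: for every rectangle a=(x,y), b=(x,y'), c=(x',y), d=(x',y')
  in I, the sequence V a -> V b (+) V c -> V d, (F a b, F a c), F b d - F c d,
  is exact at the middle.\<close>
definition middle_exact :: "(real \<times> real) set
    \<Rightarrow> (real \<times> real \<Rightarrow> 'v::ab_group_add set) \<Rightarrow> (real \<times> real \<Rightarrow> real \<times> real \<Rightarrow> 'v \<Rightarrow> 'v) \<Rightarrow> bool" where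
  "middle_exact I V F \<longleftrightarrow>
    (\<forall>x x' y y'. x \<le> x' \<longrightarrow> y \<le> y' \<longrightarrow>
      (x, y) \<in> I \<longrightarrow> (x, y') \<in> I \<longrightarrow> (x', y) \<in> I \<longrightarrow> (x', y') \<in> I \<longrightarrow>
      {(u, w). u \<in> V (x, y') \<and> w \<in> V (x', y) \<and>
               F (x, y') (x', y') u - F (x', y) (x', y') w = 0}
      = {(F (x, y) (x, y') z, F (x, y) (x', y) z) | z. z \<in> V (x, y)})"

definition submod :: "(real \<times> real) set \<Rightarrow> ('k::field \<Rightarrow> 'v::ab_group_add \<Rightarrow> 'v)
    \<Rightarrow> (real \<times> real \<Rightarrow> 'v set) \<Rightarrow> (real \<times> real \<Rightarrow> real \<times> real \<Rightarrow> 'v \<Rightarrow> 'v)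
    \<Rightarrow> (real \<times> real \<Rightarrow> 'v set) \<Rightarrow> bool" where
  "submod I scale V F W \<longleftrightarrow>
     (\<forall>t\<in>I. module.subspace scale (W t) \<and> W t \<subseteq> V t) \<and>
     (\<forall>s\<in>I. \<forall>t\<in>I. pleq s t \<longrightarrow> F s t ` W s \<subseteq> W t)"

definition indecomposable :: "('k::field \<Rightarrow> 'v::ab_group_add \<Rightarrow> 'v) \<Rightarrow> (real \<times> real) set
    \<Rightarrow> (real \<times> real \<Rightarrow> 'v set) \<Rightarrow> (real \<times> real \<Rightarrow> real \<times> real \<Rightarrow> 'v \<Rightarrow> 'v) \<Rightarrow> bool" where
  "indecomposable scale I V F \<longleftrightarrow>
     (\<exists>t\<in>I. V t \<noteq> {0}) \<and>
     (\<forall>W1 W2. submod I scale V F W1 \<longrightarrow> submod I scale V F W2 \<longrightarrow>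
        (\<forall>t\<in>I. W1 t \<inter> W2 t = {0} \<and> {u + w | u w. u \<in> W1 t \<and> w \<in> W2 t} = V t) \<longrightarrow>
        (\<forall>t\<in>I. W1 t = {0}) \<or> (\<forall>t\<in>I. W2 t = {0}))"

definition pmod_iso :: "(real \<times> real) set
    \<Rightarrow> ('k::field \<Rightarrow> 'v::ab_group_add \<Rightarrow> 'v) \<Rightarrow> (real \<times> real \<Rightarrow> 'v set) \<Rightarrow> (real \<times> real \<Rightarrow> real \<times> real \<Rightarrow> 'v \<Rightarrow> 'v)
    \<Rightarrow> ('k \<Rightarrow> 'w::ab_group_add \<Rightarrow> 'w) \<Rightarrow> (real \<times> real \<Rightarrow> 'w set) \<Rightarrow> (real \<times> real \<Rightarrow> real \<times> real \<Rightarrow> 'w \<Rightarrow> 'w)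
    \<Rightarrow> bool" where
  "pmod_iso I s1 V1 F1 s2 V2 F2 \<longleftrightarrow>
     (\<exists>\<phi>. (\<forall>t\<in>I. lin_on s1 s2 (V1 t) (\<phi> t) \<and> bij_betw (\<phi> t) (V1 t) (V2 t)) \<and>
          (\<forall>s\<in>I. \<forall>t\<in>I. pleq s t \<longrightarrow> (\<forall>x\<in>V1 s. \<phi> t (F1 s t x) = F2 s t (\<phi> s x))))"

definition kB_space :: "(real \<times> real) set \<Rightarrow> real \<times> real \<Rightarrow> 'k::field set" where
  "kB_space B t = (if t \<in> B then UNIV else {0})"

definition kB_map :: "(real \<times> real) set \<Rightarrow> real \<times> real \<Rightarrow> real \<times> real \<Rightarrow> 'k::field \<Rightarrow> 'k" where
  "kB_map B s t x = (if s \<in> B \<and> t \<in> B then x else 0)"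

definition down_closed :: "real set \<Rightarrow> bool" where
  "down_closed J \<longleftrightarrow> (\<forall>x\<in>J. \<forall>y. y \<le> x \<longrightarrow> y \<in> J)"

definition block_db :: "(real \<times> real) set \<Rightarrow> bool" where
  "block_db J \<longleftrightarrow> (\<exists>J1 J2. J1 \<noteq> {} \<and> J2 \<noteq> {} \<and> down_closed J1 \<and> down_closed J2 \<and> J = J1 \<times> J2)"

end

theory Submission imports Defs begin

lemma vs_self: "vector_space ((*) :: 'k::field \<Rightarrow> 'k \<Rightarrow> 'k)"
  by unfold_locales (auto simp: algebra_simps)

lemma down_total: "down_closed A \<Longrightarrow> down_closed B \<Longrightarrow> A \<subseteq> B \<or> B \<subseteq> A"
  unfolding down_closed_def by (meson linear subsetI)

lemma CH:
  fixes J :: "real set" and x0 b :: real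
  assumes dc: "down_closed J" and x0: "x0 \<in> J" and bd: "J \<subseteq> {p. p < b}"
  shows "\<exists>\<alpha>::nat \<Rightarrow> real. (\<forall>n. \<alpha> n \<in> J) \<and> \<alpha> 0 = x0 \<and> mono \<alpha> \<and> (\<forall>p\<in>J. \<exists>n. p \<le> \<alpha> n)"
proof -
  have bdd: "bdd_above J" using bd unfolding bdd_above_def by (meson less_le_not_le mem_Collect_eq subsetD)
  have ne: "J \<noteq> {}" using x0 by blast
  define \<sigma> where "\<sigma> = Sup J"
  have up: "\<And>p. p \<in> J \<Longrightarrow> p \<le> \<sigma>" unfolding \<sigma>_def using cSup_upper bdd by blast
  have xs: "x0 \<le> \<sigma>" using up x0 .
  show ?thesis
  proof (cases "\<sigma> \<in> J")
    case True
    define \<alpha> where "\<alpha> n = (if n = 0 then x0 else \<sigma>)" for n :: nat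
    have "\<forall>n. \<alpha> n \<in> J" unfolding \<alpha>_def using True x0 by simp
    moreover have "\<alpha> 0 = x0" unfolding \<alpha>_def by simp
    moreover have "mono \<alpha>" unfolding mono_def \<alpha>_def using xs by auto
    moreover have "\<forall>p\<in>J. \<exists>n. p \<le> \<alpha> n" using up unfolding \<alpha>_def by (metis One_nat_def one_neq_zero)
    ultimately show ?thesis by blast
  next
    case False
    have xs': "x0 < \<sigma>" using xs x0 False by (cases "x0 = \<sigma>") auto
    define \<alpha> where "\<alpha> n = \<sigma> - (\<sigma> - x0) / (real n + 1)" for n :: nat
    have lt: "\<alpha> n < \<sigma>" for n unfolding \<alpha>_def using xs' by simp
    have inJ: "\<alpha> n \<in> J" for n
    proof -
      obtain p where "p \<in> J" "\<alpha> n < p" using less_cSup_iff[OF ne bdd] lt[of n] unfolding \<sigma>_def by blast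
      then show ?thesis using dc unfolding down_closed_def by (meson less_imp_le)
    qed
    have "mono \<alpha>"
    proof (rule monoI)
      fix m n :: nat assume "m \<le> n"
      then have "(\<sigma> - x0) / (real n + 1) \<le> (\<sigma> - x0) / (real m + 1)"
        using xs' by (intro divide_left_mono) auto
      then show "\<alpha> m \<le> \<alpha> n" unfolding \<alpha>_def by simp
    qed
    moreover have "\<forall>p\<in>J. \<exists>n. p \<le> \<alpha> n"
    proof
      fix p assume p: "p \<in> J"
      have ps: "p < \<sigma>" using up[OF p] p False by (cases "p = \<sigma>") auto
      obtain n :: nat where n: "(\<sigma> - x0) / (\<sigma> - p) < real n" using reals_Archimedean2 by blast
      have "(\<sigma> - x0) / (\<sigma> - p) < real n + 1" using n by simp
      then have "\<sigma> - x0 < (real n + 1) * (\<sigma> - p)" using ps by (simp add: pos_divide_less_eq mult.commute)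
      then have "(\<sigma> - x0) / (real n + 1) < \<sigma> - p" by (simp add: pos_divide_less_eq mult.commute)
      then show "\<exists>n. p \<le> \<alpha> n" unfolding \<alpha>_def by (intro exI[of _ n]) simp
    qed
    moreover have "\<alpha> 0 = x0" unfolding \<alpha>_def by simp
    ultimately show ?thesis using inJ by blast
  qed
qed

locale ctx =
  fixes scale :: "'k::field \<Rightarrow> 'v::ab_group_add \<Rightarrow> 'v"
    and V :: "real \<times> real \<Rightarrow> 'v set"
    and F :: "real \<times> real \<Rightarrow> real \<times> real \<Rightarrow> 'v \<Rightarrow> 'v"
  assumes pm: "pmod scale Tset V F" and pf: "pfd scale Tset V" and me: "middle_exact Tset V F"
begin

sublocale vs: vector_space scale using pm by (simp add: pmod_def)

lemma T_up: "t \<in> Tset \<Longrightarrow> pleq t s \<Longrightarrow> s \<in> Tset"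
  by (auto simp: Tset_def pleq_def)

lemma Vsub: "t \<in> Tset \<Longrightarrow> vs.subspace (V t)"
  using pm by (simp add: pmod_def)

lemma Vfin: "t \<in> Tset \<Longrightarrow> \<exists>B. finite B \<and> B \<subseteq> V t \<and> vs.span B = V t"
  using pf by (simp add: pfd_def)

lemma pm_maps: "\<forall>s\<in>Tset. \<forall>t\<in>Tset. pleq s t \<longrightarrow> lin_on scale scale (V s) (F s t) \<and> F s t ` V s \<subseteq> V t"
  using pm unfolding pmod_def by (elim conjE)

lemma pm_comp: "\<forall>s\<in>Tset. \<forall>t\<in>Tset. \<forall>u\<in>Tset. pleq s t \<longrightarrow> pleq t u \<longrightarrow> (\<forall>x\<in>V s. F s u x = F t u (F s t x))"
  using pm unfolding pmod_def by (elim conjE)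

lemma pm_id: "\<forall>t\<in>Tset. \<forall>x\<in>V t. F t t x = x"
  using pm unfolding pmod_def by (elim conjE)

lemma Fsub: "s \<in> Tset \<Longrightarrow> pleq s t \<Longrightarrow> x \<in> V s \<Longrightarrow> F s t x \<in> V t"
proof -
  assume a: "s \<in> Tset" "pleq s t" "x \<in> V s"
  have "t \<in> Tset" using T_up a by blast
  then have "F s t ` V s \<subseteq> V t" using pm_maps a by blast
  then show ?thesis using a by blast
qed

lemma Flin: "s \<in> Tset \<Longrightarrow> pleq s t \<Longrightarrow> lin_on scale scale (V s) (F s t)"
proof -
  assume a: "s \<in> Tset" "pleq s t"
  have "t \<in> Tset" using T_up a by blast
  then show ?thesis using pm_maps a by blast
qed

lemma Fadd: "s \<in> Tset \<Longrightarrow> pleq s t \<Longrightarrow> x \<in> V s \<Longrightarrow> y \<in> V s \<Longrightarrow> F s t (x + y) = F s t x + F s t y"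
  using Flin[of s t] unfolding lin_on_def by simp

lemma Fscale: "s \<in> Tset \<Longrightarrow> pleq s t \<Longrightarrow> x \<in> V s \<Longrightarrow> F s t (scale c x) = scale c (F s t x)"
  using Flin[of s t] unfolding lin_on_def by simp

lemma F0: "s \<in> Tset \<Longrightarrow> pleq s t \<Longrightarrow> F s t 0 = 0"
  using Fscale[of s t 0 0] vs.subspace_0[OF Vsub[of s]] by simp

lemma Fneg: "s \<in> Tset \<Longrightarrow> pleq s t \<Longrightarrow> x \<in> V s \<Longrightarrow> F s t (- x) = - F s t x"
  using Fscale[of s t x "-1"] by (simp add: vs.scale_minus_left)

lemma Fdiff: "s \<in> Tset \<Longrightarrow> pleq s t \<Longrightarrow> x \<in> V s \<Longrightarrow> y \<in> V s \<Longrightarrow> F s t (x - y) = F s t x - F s t y"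
proof -
  assume a: "s \<in> Tset" "pleq s t" "x \<in> V s" "y \<in> V s"
  have "- y \<in> V s" using vs.subspace_neg[OF Vsub[OF a(1)] a(4)] .
  then have "F s t (x + - y) = F s t x + F s t (- y)" using Fadd a by blast
  also have "F s t (- y) = - F s t y" using Fneg a by blast
  finally show ?thesis by simp
qed

lemma Fid: "t \<in> Tset \<Longrightarrow> x \<in> V t \<Longrightarrow> F t t x = x"
  using pm_id by blast

lemma Fcomp: "s \<in> Tset \<Longrightarrow> pleq s t \<Longrightarrow> pleq t u \<Longrightarrow> x \<in> V s \<Longrightarrow> F s u x = F t u (F s t x)"
proof -
  assume a: "s \<in> Tset" "pleq s t" "pleq t u" "x \<in> V s"
  have "t \<in> Tset" "u \<in> Tset" using T_up a by blast+
  then show ?thesis using pm_comp a by blast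
qed

lemma pleq_refl[simp]: "pleq s s" by (simp add: pleq_def)
lemma pleq_trans: "pleq s t \<Longrightarrow> pleq t u \<Longrightarrow> pleq s u" by (auto simp: pleq_def)

lemma ME:
  assumes "x \<le> x'" "y \<le> y'" "(x, y) \<in> Tset" "u \<in> V (x, y')" "w \<in> V (x', y)"
    "F (x, y') (x', y') u = F (x', y) (x', y') w"
  shows "\<exists>z\<in>V (x, y). F (x, y) (x, y') z = u \<and> F (x, y) (x', y) z = w"
proof -
  have T: "(x, y') \<in> Tset" "(x', y) \<in> Tset" "(x', y') \<in> Tset"
    using assms by (auto simp: Tset_def)
  have eq: "{(u, w). u \<in> V (x, y') \<and> w \<in> V (x', y) \<and>
               F (x, y') (x', y') u - F (x', y) (x', y') w = 0}
      = {(F (x, y) (x, y') z, F (x, y) (x', y) z) | z. z \<in> V (x, y)}"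
    using me assms(1,2,3) T unfolding middle_exact_def by presburger
  have "(u, w) \<in> {(u, w). u \<in> V (x, y') \<and> w \<in> V (x', y) \<and>
               F (x, y') (x', y') u - F (x', y) (x', y') w = 0}" using assms by simp
  then have "(u, w) \<in> {(F (x, y) (x, y') z, F (x, y) (x', y) z) | z. z \<in> V (x, y)}"
    unfolding eq .
  then obtain z where "(u, w) = (F (x, y) (x, y') z, F (x, y) (x', y) z)" "z \<in> V (x, y)"
    by blast
  then show ?thesis by auto
qed

lemma LA_eq:
  assumes S: "vs.subspace S" and S': "vs.subspace S'" and sub: "S \<subseteq> S'"
    and W: "finite W" "S' \<subseteq> vs.span W" and d: "vs.dim S' \<le> vs.dim S"
  shows "S' \<subseteq> S"
proof
  fix t assume t: "t \<in> S'"
  obtain B where B: "B \<subseteq> S" "vs.independent B" "S \<subseteq> vs.span B"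
    using vs.maximal_independent_subset[of S] by blast
  obtain C where C: "C \<subseteq> S'" "vs.independent C" "S' \<subseteq> vs.span C"
    using vs.maximal_independent_subset[of S'] by blast
  have cB: "card B = vs.dim S" using vs.basis_card_eq_dim B by blast
  have cC: "card C = vs.dim S'" using vs.basis_card_eq_dim C by blast
  have fC: "finite C" using vs.independent_span_bound[OF W(1) C(2)] C(1) W(2) by blast
  have spB: "vs.span B = S" using B S vs.span_minimal[of B S] by blast
  show "t \<in> S"
  proof (rule ccontr)
    assume "t \<notin> S"
    then have tn: "t \<notin> vs.span B" using spB by simp
    then have ind: "vs.independent (insert t B)" using vs.independent_insertI B by blast
    have "insert t B \<subseteq> vs.span C" using t B sub C by blast
    from vs.independent_span_bound[OF fC ind this]
    have "finite (insert t B)" "card (insert t B) \<le> card C" by auto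
    moreover have "t \<notin> B" using tn vs.span_base by blast
    ultimately show False using cB cC d by simp
  qed
qed

lemma LA_chainmin:
  assumes ne: "\<SS> \<noteq> {}" and sub: "\<And>S. S \<in> \<SS> \<Longrightarrow> vs.subspace S \<and> S \<subseteq> vs.span W"
    and W: "finite W" and ch: "\<And>S S'. S \<in> \<SS> \<Longrightarrow> S' \<in> \<SS> \<Longrightarrow> S \<subseteq> S' \<or> S' \<subseteq> S"
  shows "\<exists>S0\<in>\<SS>. \<forall>S\<in>\<SS>. S0 \<subseteq> S"
proof -
  obtain S1 where S1: "S1 \<in> \<SS>" using ne by blast
  have "\<exists>S0. S0 \<in> \<SS> \<and> (\<forall>S. S \<in> \<SS> \<longrightarrow> vs.dim S0 \<le> vs.dim S)"
    using ex_has_least_nat[of "\<lambda>S. S \<in> \<SS>" S1 vs.dim] S1 by simp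
  then obtain S0 where S0: "S0 \<in> \<SS>" and mn: "\<And>S. S \<in> \<SS> \<Longrightarrow> vs.dim S0 \<le> vs.dim S"
    by blast
  have "\<forall>S\<in>\<SS>. S0 \<subseteq> S"
  proof
    fix S assume S: "S \<in> \<SS>"
    show "S0 \<subseteq> S"
    proof (cases "S0 \<subseteq> S")
      case False
      have 1: "S \<subseteq> S0" using ch[OF S S0] False by simp
      have 2: "vs.subspace S" "vs.subspace S0" "S0 \<subseteq> vs.span W" using sub[OF S] sub[OF S0] by auto
      show ?thesis using LA_eq[OF 2(1) 2(2) 1 W 2(3) mn[OF S]] .
    qed
  qed
  then show ?thesis using S0 by blast
qed

lemma lin_add: "Vector_Spaces.linear scale (*) g \<Longrightarrow> g (x + y) = g x + g y"
  by (simp add: Vector_Spaces.linear_iff)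
lemma lin_scale: "Vector_Spaces.linear scale (*) g \<Longrightarrow> g (scale c x) = c * g x"
  by (simp add: Vector_Spaces.linear_iff)
lemma lin_zero: "Vector_Spaces.linear scale (*) g \<Longrightarrow> g 0 = 0"
  using lin_scale[of g 0 0] by simp
lemma lin_diff: "Vector_Spaces.linear scale (*) g \<Longrightarrow> g (x - y) = g x - g y"
  using lin_add[of g "x - y" y] by (simp add: algebra_simps)

lemma lin_span0: assumes g: "Vector_Spaces.linear scale (*) g" and z: "\<And>b. b \<in> B \<Longrightarrow> g b = 0"
  and y: "y \<in> vs.span B" shows "g y = 0"
  using y
proof (induct rule: vs.span_induct_alt)
  case base then show ?case using lin_zero[OF g] .
next
  case (step c x y) then show ?case using lin_add[OF g] lin_scale[OF g] z by simp
qed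

lemma L1:
  assumes W: "vs.subspace W" and e: "e \<notin> W"
  shows "\<exists>g. Vector_Spaces.linear scale (*) g \<and> g e = 1 \<and> (\<forall>z\<in>W. g z = 0)"
proof -
  obtain B where B: "B \<subseteq> W" "vs.independent B" "W \<subseteq> vs.span B"
    using vs.maximal_independent_subset[of W] by blast
  have spB: "vs.span B = W" using B W vs.span_minimal[of B W] by blast
  have ind: "vs.independent (insert e B)" using vs.independent_insertI[of e B] e spB B(2) by simp
  interpret vp: vector_space_pair scale "(*) :: 'k \<Rightarrow> 'k \<Rightarrow> 'k"
    by (intro vector_space_pair.intro vs.vector_space_axioms vs_self)
  obtain g where g: "Vector_Spaces.linear scale (*) g" "\<forall>x\<in>insert e B. g x = (if x = e then 1 else 0)"
    using vp.linear_independent_extend[OF ind, of "\<lambda>x. if x = e then 1 else 0"] by blast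
  have eB: "e \<notin> B" using e B(1) by blast
  have "\<forall>z\<in>W. g z = 0"
  proof
    fix z assume "z \<in> W"
    then have "z \<in> vs.span B" using spB by simp
    then show "g z = 0" using lin_span0[OF g(1), of B z] g(2) eB by fastforce
  qed
  then show ?thesis using g by auto
qed

lemma L2:
  assumes V1: "vs.subspace V1" and Z: "vs.subspace Z" and Fm: "lin_on scale scale V1 Fm"
    and g: "Vector_Spaces.linear scale (*) g" and gz: "\<And>x. x \<in> V1 \<Longrightarrow> Fm x \<in> Z \<Longrightarrow> g x = 0"
  shows "\<exists>g'. Vector_Spaces.linear scale (*) g' \<and> (\<forall>x\<in>V1. g' (Fm x) = g x) \<and> (\<forall>z\<in>Z. g' z = 0)"
proof -
  have Fadd': "\<And>x y. x \<in> V1 \<Longrightarrow> y \<in> V1 \<Longrightarrow> Fm (x + y) = Fm x + Fm y"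
    and Fsc': "\<And>c x. x \<in> V1 \<Longrightarrow> Fm (scale c x) = scale c (Fm x)"
    using Fm unfolding lin_on_def by auto
  have F0': "Fm 0 = 0" using Fsc'[of 0 0] vs.subspace_0[OF V1] by simp
  obtain BZ where BZ: "BZ \<subseteq> Z" "vs.independent BZ" "Z \<subseteq> vs.span BZ"
    using vs.maximal_independent_subset[of Z] by blast
  have spBZ: "vs.span BZ = Z" using BZ Z vs.span_minimal[of BZ Z] by blast
  obtain B where B: "BZ \<subseteq> B" "B \<subseteq> BZ \<union> Fm ` V1" "vs.independent B" "BZ \<union> Fm ` V1 \<subseteq> vs.span B"
    using vs.maximal_independent_subset_extend[of BZ "BZ \<union> Fm ` V1"] BZ(2) by blast
  define pre where "pre b = (SOME x. x \<in> V1 \<and> Fm x = b)" for b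
  have pre: "\<And>b. b \<in> Fm ` V1 \<Longrightarrow> pre b \<in> V1 \<and> Fm (pre b) = b"
    unfolding pre_def by (rule someI_ex) blast
  interpret vp: vector_space_pair scale "(*) :: 'k \<Rightarrow> 'k \<Rightarrow> 'k"
    by (intro vector_space_pair.intro vs.vector_space_axioms vs_self)
  obtain g' where g': "Vector_Spaces.linear scale (*) g'" "\<forall>x\<in>B. g' x = (if x \<in> BZ then 0 else g (pre x))"
    using vp.linear_independent_extend[OF B(3), of "\<lambda>x. if x \<in> BZ then 0 else g (pre x)"] by blast
  have gZ: "\<forall>z\<in>Z. g' z = 0"
  proof
    fix z assume "z \<in> Z"
    then have "z \<in> vs.span BZ" using spBZ by simp
    moreover have "\<And>b. b \<in> BZ \<Longrightarrow> g' b = 0" using g'(2) B(1) by auto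
    ultimately show "g' z = 0" using lin_span0[OF g'(1), of BZ z] by blast
  qed
  have claim: "\<exists>x\<in>V1. \<exists>z\<in>Z. y = Fm x + z \<and> g' y = g x" if "y \<in> vs.span B" for y
    using that
  proof (induct rule: vs.span_induct_alt)
    case base
    show ?case using vs.subspace_0[OF V1] vs.subspace_0[OF Z] F0' lin_zero[OF g] lin_zero[OF g'(1)]
      by (intro bexI[of _ 0]) auto
  next
    case (step c b y)
    then obtain x z where xz: "x \<in> V1" "z \<in> Z" "y = Fm x + z" "g' y = g x" by blast
    show ?case
    proof (cases "b \<in> BZ")
      case True
      have "scale c b + y = Fm x + (scale c b + z)" using xz by (simp add: algebra_simps)
      moreover have "scale c b + z \<in> Z" using True BZ(1) xz(2) Z
        by (meson in_mono vs.subspace_add vs.subspace_scale)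
      moreover have "g' (scale c b + y) = g x"
        using lin_add[OF g'(1)] lin_scale[OF g'(1)] g'(2) True B(1) step(1) xz by auto
      ultimately show ?thesis using xz(1) by blast
    next
      case False
      then have bF: "b \<in> Fm ` V1" using B(2) step(1) by blast
      have p: "pre b \<in> V1" "Fm (pre b) = b" using pre[OF bF] by auto
      have sx: "scale c (pre b) + x \<in> V1" using p(1) xz(1) V1
        by (meson vs.subspace_add vs.subspace_scale)
      have "Fm (scale c (pre b) + x) = scale c b + Fm x"
        using Fadd'[of "scale c (pre b)" x] Fsc'[of "pre b" c] p xz(1) vs.subspace_scale[OF V1 p(1)]
        by simp
      then have "scale c b + y = Fm (scale c (pre b) + x) + z" using xz(3) by (simp add: algebra_simps)
      moreover have "g' (scale c b + y) = g (scale c (pre b) + x)"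
        using lin_add[OF g'(1)] lin_scale[OF g'(1)] lin_add[OF g] lin_scale[OF g] g'(2) False step(1) xz(4)
        by auto
      ultimately show ?thesis using sx xz(2) by blast
    qed
  qed
  have "\<forall>x\<in>V1. g' (Fm x) = g x"
  proof
    fix x assume x: "x \<in> V1"
    have "Fm x \<in> vs.span B" using B(4) x by blast
    then obtain x' z where xz: "x' \<in> V1" "z \<in> Z" "Fm x = Fm x' + z" "g' (Fm x) = g x'"
      using claim by blast
    have d: "x - x' \<in> V1" using vs.subspace_diff[OF V1 x xz(1)] .
    have "Fm x = Fm (x - x') + Fm x'" using Fadd'[OF d xz(1)] by simp
    then have "Fm (x - x') = z" using xz(3) by (simp add: algebra_simps)
    then have "g (x - x') = 0" using gz[OF d] xz(2) by simp
    then show "g' (Fm x) = g x" using xz(4) lin_diff[OF g] by simp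
  qed
  then show ?thesis using g'(1) gZ by blast
qed

definition Kill :: "real set \<Rightarrow> real set \<Rightarrow> real \<times> real \<Rightarrow> 'v set" where
  "Kill J1 J2 t = {z \<in> V t. (\<forall>p. fst t \<le> p \<longrightarrow> p \<notin> J1 \<longrightarrow> F t (p, snd t) z = 0) \<and>
                             (\<forall>q. snd t \<le> q \<longrightarrow> q \<notin> J2 \<longrightarrow> F t (fst t, q) z = 0)}"

lemma Kill_mono: "J1 \<subseteq> J1' \<Longrightarrow> J2 \<subseteq> J2' \<Longrightarrow> Kill J1 J2 t \<subseteq> Kill J1' J2' t"
  unfolding Kill_def by blast

lemma Kill_sub: assumes t: "t \<in> Tset" shows "vs.subspace (Kill J1 J2 t)"
proof (rule vs.subspaceI)
  have p1: "\<And>p. fst t \<le> p \<Longrightarrow> pleq t (p, snd t)" and p2: "\<And>q. snd t \<le> q \<Longrightarrow> pleq t (fst t, q)"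
    by (auto simp: pleq_def)
  show "0 \<in> Kill J1 J2 t"
    unfolding Kill_def using vs.subspace_0[OF Vsub[OF t]] F0[OF t p1] F0[OF t p2] by auto
  show "x + y \<in> Kill J1 J2 t" if "x \<in> Kill J1 J2 t" "y \<in> Kill J1 J2 t" for x y
    using that vs.subspace_add[OF Vsub[OF t]] Fadd[OF t p1] Fadd[OF t p2] unfolding Kill_def
    by simp
  show "scale c x \<in> Kill J1 J2 t" if "x \<in> Kill J1 J2 t" for c x
    using that vs.subspace_scale[OF Vsub[OF t]] Fscale[OF t p1] Fscale[OF t p2] unfolding Kill_def
    by simp
qed

lemma MinDown:
  fixes K :: "real set \<Rightarrow> 'v set" and a :: "real \<times> real" and x0 :: real
  assumes aT: "a \<in> Tset"
    and mono: "\<And>J J'. J \<subseteq> J' \<Longrightarrow> K J \<subseteq> K J'"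
    and sub: "\<And>J. vs.subspace (K J) \<and> K J \<subseteq> V a"
    and inter: "\<And>\<J> z. \<J> \<noteq> {} \<Longrightarrow> (\<forall>J\<in>\<J>. z \<in> K J) \<Longrightarrow> z \<in> K (\<Inter>\<J>)"
    and J0: "down_closed J0" "x0 \<in> J0" "K J0 \<noteq> {0}"
  defines "Js \<equiv> \<Inter>{J. down_closed J \<and> x0 \<in> J \<and> K J \<noteq> {0}}"
  shows "down_closed Js" "x0 \<in> Js" "Js \<subseteq> J0" "K Js \<noteq> {0}"
    "\<And>J. down_closed J \<Longrightarrow> x0 \<in> J \<Longrightarrow> K J \<noteq> {0} \<Longrightarrow> Js \<subseteq> J"
proof -
  let ?Fam = "{J. down_closed J \<and> x0 \<in> J \<and> K J \<noteq> {0}}"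
  have J0F: "J0 \<in> ?Fam" using J0 by simp
  show "down_closed Js" unfolding down_closed_def
  proof (intro ballI allI impI)
    fix x y assume x: "x \<in> Js" and y: "y \<le> x"
    show "y \<in> Js" unfolding Js_def
    proof (rule InterI)
      fix J assume J: "J \<in> ?Fam"
      have "x \<in> J" using InterD[OF x[unfolded Js_def] J] .
      then show "y \<in> J" using J y unfolding down_closed_def by simp
    qed
  qed
  show "x0 \<in> Js" unfolding Js_def by (rule InterI) simp
  show "Js \<subseteq> J0" unfolding Js_def using J0F by (rule Inter_lower)
  show "\<And>J. down_closed J \<Longrightarrow> x0 \<in> J \<Longrightarrow> K J \<noteq> {0} \<Longrightarrow> Js \<subseteq> J"
    unfolding Js_def by (rule Inter_lower) simp
  obtain W where W: "finite W" "W \<subseteq> V a" "vs.span W = V a" using Vfin[OF aT] by blast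
  have ch: "\<And>S S'. S \<in> K ` ?Fam \<Longrightarrow> S' \<in> K ` ?Fam \<Longrightarrow> S \<subseteq> S' \<or> S' \<subseteq> S"
  proof -
    fix S S' assume "S \<in> K ` ?Fam" "S' \<in> K ` ?Fam"
    then obtain J J' where JJ: "S = K J" "S' = K J'" "down_closed J" "down_closed J'" by blast
    have "J \<subseteq> J' \<or> J' \<subseteq> J" using down_total[OF JJ(3,4)] .
    then show "S \<subseteq> S' \<or> S' \<subseteq> S" using mono JJ(1,2) by blast
  qed
  have sb: "\<And>S. S \<in> K ` ?Fam \<Longrightarrow> vs.subspace S \<and> S \<subseteq> vs.span W"
  proof -
    fix S assume "S \<in> K ` ?Fam"
    then obtain J where "S = K J" by blast
    then show "vs.subspace S \<and> S \<subseteq> vs.span W" using sub[of J] W(3) by simp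
  qed
  have ne: "K ` ?Fam \<noteq> {}" using J0F by blast
  have "\<exists>S0\<in>K ` ?Fam. \<forall>S\<in>K ` ?Fam. S0 \<subseteq> S" using LA_chainmin[OF ne sb W(1) ch] .
  then obtain S0 where S0: "S0 \<in> K ` ?Fam" "\<forall>S\<in>K ` ?Fam. S0 \<subseteq> S" by (rule bexE)
  from S0(1) obtain Jm where Jm0: "S0 = K Jm" "Jm \<in> ?Fam" by (rule imageE)
  have Jm: "Jm \<in> ?Fam" "\<forall>J\<in>?Fam. K Jm \<subseteq> K J" using Jm0 S0(2) by auto
  have "K Jm \<subseteq> K Js"
  proof
    fix z assume "z \<in> K Jm"
    then have "\<forall>J\<in>?Fam. z \<in> K J" using Jm(2) by blast
    moreover have "?Fam \<noteq> {}" using J0F by blast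
    ultimately show "z \<in> K Js" unfolding Js_def using inter[of ?Fam z] by simp
  qed
  moreover have "K Jm \<noteq> {0}" using Jm(1) by simp
  moreover have "0 \<in> K Jm" "0 \<in> K Js" using sub vs.subspace_0 by blast+
  ultimately show "K Js \<noteq> {0}" by blast
qed

end

locale ctx2 = ctx scale V F
  for scale :: "'k::field \<Rightarrow> 'v::ab_group_add \<Rightarrow> 'v" and V F +
  fixes x0 y0 x1 y1 :: real and v :: 'v
  assumes le: "x0 \<le> x1" "y0 \<le> y1" and aT: "(x0, y0) \<in> Tset"
    and vV: "v \<in> V (x0, y0)" and v0: "v \<noteq> 0"
    and vb: "F (x0, y0) (x0, y1) v = 0" and vc: "F (x0, y0) (x1, y0) v = 0"
begin

abbreviation "a \<equiv> (x0, y0)"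

definition "J1s = \<Inter>{J. down_closed J \<and> x0 \<in> J \<and> Kill J {q. q < y1} a \<noteq> {0}}"
definition "J2s = \<Inter>{J. down_closed J \<and> y0 \<in> J \<and> Kill J1s J a \<noteq> {0}}"

lemma v_Kill: "v \<in> Kill {p. p < x1} {q. q < y1} a"
proof -
  have "F a (p, y0) v = 0" if "x0 \<le> p" "\<not> p < x1" for p
  proof -
    have "F a (p, y0) v = F (x1, y0) (p, y0) (F a (x1, y0) v)"
      using Fcomp[OF aT, of "(x1, y0)" "(p, y0)" v] that le vV by (simp add: pleq_def)
    also have "\<dots> = 0" using vc F0[of "(x1, y0)" "(p, y0)"] T_up[OF aT, of "(x1,y0)"] le that
      by (simp add: pleq_def)
    finally show ?thesis .
  qed
  moreover have "F a (x0, q) v = 0" if "y0 \<le> q" "\<not> q < y1" for q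
  proof -
    have "F a (x0, q) v = F (x0, y1) (x0, q) (F a (x0, y1) v)"
      using Fcomp[OF aT, of "(x0, y1)" "(x0, q)" v] that le vV by (simp add: pleq_def)
    also have "\<dots> = 0" using vb F0[of "(x0, y1)" "(x0, q)"] T_up[OF aT, of "(x0,y1)"] le that
      by (simp add: pleq_def)
    finally show ?thesis .
  qed
  ultimately show ?thesis unfolding Kill_def using vV by auto
qed

lemma Kill_inter1: "\<J> \<noteq> {} \<Longrightarrow> (\<forall>J\<in>\<J>. z \<in> Kill J J2 t) \<Longrightarrow> z \<in> Kill (\<Inter>\<J>) J2 t"
  unfolding Kill_def by blast
lemma Kill_inter2: "\<J> \<noteq> {} \<Longrightarrow> (\<forall>J\<in>\<J>. z \<in> Kill J1 J t) \<Longrightarrow> z \<in> Kill J1 (\<Inter>\<J>) t"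
  unfolding Kill_def by blast

lemma dc_lt: "down_closed {p::real. p < c}" unfolding down_closed_def by auto

lemma J1s_props: "down_closed J1s" "x0 \<in> J1s" "J1s \<subseteq> {p. p < x1}" "Kill J1s {q. q < y1} a \<noteq> {0}"
    "\<And>J. down_closed J \<Longrightarrow> x0 \<in> J \<Longrightarrow> Kill J {q. q < y1} a \<noteq> {0} \<Longrightarrow> J1s \<subseteq> J"
proof -
  have x01: "x0 < x1"
  proof (rule ccontr)
    assume "\<not> x0 < x1" then have "x1 = x0" using le by simp
    then have "v = 0" using vc Fid[OF aT vV] by simp
    then show False using v0 by simp
  qed
  have K0: "Kill {p. p < x1} {q. q < y1} a \<noteq> {0}" using v_Kill v0 by blast
  note M = MinDown[of a "\<lambda>J. Kill J {q. q < y1} a" "{p. p < x1}" x0, OF aT _ _ _ dc_lt _ K0]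
  have h1: "\<And>J J'. J \<subseteq> J' \<Longrightarrow> Kill J {q. q < y1} a \<subseteq> Kill J' {q. q < y1} a" using Kill_mono by blast
  have h2: "\<And>J. vs.subspace (Kill J {q. q < y1} a) \<and> Kill J {q. q < y1} a \<subseteq> V a"
    using Kill_sub[OF aT] unfolding Kill_def by blast
  have h3: "\<And>\<J> z. \<J> \<noteq> {} \<Longrightarrow> (\<forall>J\<in>\<J>. z \<in> Kill J {q. q < y1} a) \<Longrightarrow> z \<in> Kill (\<Inter>\<J>) {q. q < y1} a"
    using Kill_inter1 by blast
  have h4: "x0 \<in> {p. p < x1}" using x01 by simp
  note M' = M[OF h1 h2 h3 h4]
  show "down_closed J1s" "x0 \<in> J1s" "J1s \<subseteq> {p. p < x1}" "Kill J1s {q. q < y1} a \<noteq> {0}"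
    "\<And>J. down_closed J \<Longrightarrow> x0 \<in> J \<Longrightarrow> Kill J {q. q < y1} a \<noteq> {0} \<Longrightarrow> J1s \<subseteq> J"
    using M' unfolding J1s_def by blast+
qed

lemma J2s_props: "down_closed J2s" "y0 \<in> J2s" "J2s \<subseteq> {q. q < y1}" "Kill J1s J2s a \<noteq> {0}"
    "\<And>J. down_closed J \<Longrightarrow> y0 \<in> J \<Longrightarrow> Kill J1s J a \<noteq> {0} \<Longrightarrow> J2s \<subseteq> J"
proof -
  have y01: "y0 < y1"
  proof (rule ccontr)
    assume "\<not> y0 < y1" then have "y1 = y0" using le by simp
    then have "v = 0" using vb Fid[OF aT vV] by simp
    then show False using v0 by simp
  qed
  note M = MinDown[of a "\<lambda>J. Kill J1s J a" "{q. q < y1}" y0, OF aT _ _ _ dc_lt _ J1s_props(4)]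
  have h1: "\<And>J J'. J \<subseteq> J' \<Longrightarrow> Kill J1s J a \<subseteq> Kill J1s J' a" using Kill_mono by blast
  have h2: "\<And>J. vs.subspace (Kill J1s J a) \<and> Kill J1s J a \<subseteq> V a"
    using Kill_sub[OF aT] unfolding Kill_def by blast
  have h3: "\<And>\<J> z. \<J> \<noteq> {} \<Longrightarrow> (\<forall>J\<in>\<J>. z \<in> Kill J1s J a) \<Longrightarrow> z \<in> Kill J1s (\<Inter>\<J>) a"
    using Kill_inter2 by blast
  have h4: "y0 \<in> {q. q < y1}" using y01 by simp
  note M' = M[OF h1 h2 h3 h4]
  show "down_closed J2s" "y0 \<in> J2s" "J2s \<subseteq> {q. q < y1}" "Kill J1s J2s a \<noteq> {0}"
    "\<And>J. down_closed J \<Longrightarrow> y0 \<in> J \<Longrightarrow> Kill J1s J a \<noteq> {0} \<Longrightarrow> J2s \<subseteq> J"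
    using M' unfolding J2s_def by blast+
qed

lemma pq: "x \<le> x' \<Longrightarrow> y \<le> y' \<Longrightarrow> pleq (x, y) (x', y')" by (simp add: pleq_def)

lemma survival:
  assumes e: "e \<in> Kill J1s J2s a" "e \<noteq> 0" and s: "s1 \<in> J1s" "s2 \<in> J2s" "x0 \<le> s1" "y0 \<le> s2"
  shows "F a (s1, s2) e \<noteq> 0"
proof
  assume Fe: "F a (s1, s2) e = 0"
  have eV: "e \<in> V a" using e(1) unfolding Kill_def by simp
  have T1: "(x0, s2) \<in> Tset" "(s1, y0) \<in> Tset" using T_up[OF aT] s by (auto simp: pleq_def)
  define u where "u = F a (x0, s2) e"
  have uV: "u \<in> V (x0, s2)" unfolding u_def using Fsub[OF aT _ eV] s by (simp add: pleq_def)
  have "F (x0, s2) (s1, s2) u = F (s1, y0) (s1, s2) 0"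
    using Fcomp[OF aT pq[of x0 x0 y0 s2] pq[of x0 s1 s2 s2] eV] Fe F0[OF T1(2) pq[of s1 s1 y0 s2]] s
    unfolding u_def by simp
  then obtain z where z: "z \<in> V a" "F a (x0, s2) z = u" "F a (s1, y0) z = 0"
    using ME[of x0 s1 y0 s2 u 0] s aT uV vs.subspace_0[OF Vsub[OF T1(2)]] by auto
  have zK: "z \<in> Kill {p. p < s1} J2s a"
  proof -
    have "F a (p, y0) z = 0" if "x0 \<le> p" "\<not> p < s1" for p
      using Fcomp[OF aT pq[of x0 s1 y0 y0] pq[of s1 p y0 y0] z(1)] z(3) F0[OF T1(2) pq[of s1 p y0 y0]] that s(3)
      by simp
    moreover have "F a (x0, q) z = 0" if "y0 \<le> q" "q \<notin> J2s" for q
    proof -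
      have "s2 \<le> q" using that s(2) J2s_props(1) unfolding down_closed_def by (meson linear)
      then have "F a (x0, q) z = F (x0, s2) (x0, q) u"
        using Fcomp[OF aT pq[of x0 x0 y0 s2] pq[of x0 x0 s2 q] z(1)] z(2) s by simp
      also have "\<dots> = F a (x0, q) e"
        using Fcomp[OF aT pq[of x0 x0 y0 s2] pq[of x0 x0 s2 q] eV] \<open>s2 \<le> q\<close> s unfolding u_def by simp
      also have "\<dots> = 0" using e(1) that unfolding Kill_def by simp
      finally show ?thesis .
    qed
    ultimately show ?thesis unfolding Kill_def using z(1) by simp
  qed
  have z0: "z = 0"
  proof (cases "x0 < s1")
    case True
    have "Kill {p. p < s1} J2s a \<subseteq> Kill {p. p < s1} {q. q < y1} a"
      using Kill_mono J2s_props(3) by blast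
    show ?thesis
    proof (rule ccontr)
      assume "z \<noteq> 0"
      then have "Kill {p. p < s1} {q. q < y1} a \<noteq> {0}"
        using zK \<open>Kill {p. p < s1} J2s a \<subseteq> _\<close> by blast
      then have "J1s \<subseteq> {p. p < s1}" using J1s_props(5)[OF dc_lt] True by simp
      then show False using s(1) by blast
    qed
  next
    case False
    then have "F a (x0, y0) z = 0" using zK unfolding Kill_def by simp
    then show ?thesis using Fid[OF aT z(1)] by simp
  qed
  have u0: "u = 0" using z(2) z0 F0[OF aT pq[of x0 x0 y0 s2]] s by simp
  have eK: "e \<in> Kill J1s {q. q < s2} a"
  proof -
    have "F a (x0, q) e = 0" if "y0 \<le> q" "\<not> q < s2" for q
      using Fcomp[OF aT pq[of x0 x0 y0 s2] pq[of x0 x0 s2 q] eV] u0 F0[OF T1(1) pq[of x0 x0 s2 q]] that s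
      unfolding u_def by simp
    then show ?thesis using e(1) unfolding Kill_def by auto
  qed
  show False
  proof (cases "y0 < s2")
    case True
    have "Kill J1s {q. q < s2} a \<noteq> {0}" using eK e(2) by blast
    then have "J2s \<subseteq> {q. q < s2}" using J2s_props(5)[OF dc_lt] True by simp
    then show False using s(2) by blast
  next
    case False
    then have "F a (x0, y0) e = 0" using eK unfolding Kill_def by simp
    then show False using Fid[OF aT eV] e(2) by simp
  qed
qed

definition "D = {t \<in> Tset. fst t \<in> J1s \<and> snd t \<in> J2s}"
abbreviation "KK t \<equiv> Kill J1s J2s t"

lemma D_T: "t \<in> D \<Longrightarrow> t \<in> Tset" by (simp add: D_def)

lemma D_bound: "t \<in> D \<Longrightarrow> fst t < x1 \<and> snd t < y1 \<and> 0 < fst t + snd t"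
  using J1s_props(3) J2s_props(3) unfolding D_def Tset_def by auto

lemma D_down: "t \<in> D \<Longrightarrow> s \<in> Tset \<Longrightarrow> pleq s t \<Longrightarrow> s \<in> D"
  using J1s_props(1) J2s_props(1) unfolding D_def down_closed_def pleq_def by auto

definition join :: "real \<times> real \<Rightarrow> real \<times> real \<Rightarrow> real \<times> real" where
  "join s t = (max (fst s) (fst t), max (snd s) (snd t))"

lemma join_ge: "pleq s (join s t)" "pleq t (join s t)" by (auto simp: join_def pleq_def)
lemma join_le: "pleq s u \<Longrightarrow> pleq t u \<Longrightarrow> pleq (join s t) u" by (auto simp: join_def pleq_def)

lemma D_join: "s \<in> D \<Longrightarrow> t \<in> D \<Longrightarrow> join s t \<in> D"
proof -
  assume st: "s \<in> D" "t \<in> D"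
  have "join s t \<in> Tset" using T_up[OF D_T[OF st(1)] join_ge(1)] .
  moreover have "fst (join s t) \<in> J1s" "snd (join s t) \<in> J2s"
    using st unfolding D_def join_def by (auto simp: max_def)
  ultimately show ?thesis unfolding D_def by simp
qed

lemma a_D: "a \<in> D" using aT J1s_props(2) J2s_props(2) by (simp add: D_def)

lemma push_Kill:
  assumes s: "s \<in> Tset" and z: "z \<in> KK s" and st: "pleq s t"
  shows "F s t z \<in> KK t"
proof -
  have zV: "z \<in> V s" using z unfolding Kill_def by simp
  have r: "F t (p, snd t) (F s t z) = 0" if "fst t \<le> p" "p \<notin> J1s" for p
  proof -
    have "F t (p, snd t) (F s t z) = F s (p, snd t) z"
      using Fcomp[OF s st _ zV, of "(p, snd t)"] that by (simp add: pleq_def)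
    also have "\<dots> = F (p, snd s) (p, snd t) (F s (p, snd s) z)"
      using Fcomp[OF s _ _ zV, of "(p, snd s)" "(p, snd t)"] that st by (simp add: pleq_def)
    also have "F s (p, snd s) z = 0" using z that st unfolding Kill_def pleq_def by simp
    finally show ?thesis using F0[OF T_up[OF s, of "(p, snd s)"], of "(p, snd t)"] that st
      by (simp add: pleq_def)
  qed
  have u: "F t (fst t, q) (F s t z) = 0" if "snd t \<le> q" "q \<notin> J2s" for q
  proof -
    have "F t (fst t, q) (F s t z) = F s (fst t, q) z"
      using Fcomp[OF s st _ zV, of "(fst t, q)"] that by (simp add: pleq_def)
    also have "\<dots> = F (fst s, q) (fst t, q) (F s (fst s, q) z)"
      using Fcomp[OF s _ _ zV, of "(fst s, q)" "(fst t, q)"] that st by (simp add: pleq_def)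
    also have "F s (fst s, q) z = 0" using z that st unfolding Kill_def pleq_def by simp
    finally show ?thesis using F0[OF T_up[OF s, of "(fst s, q)"], of "(fst t, q)"] that st
      by (simp add: pleq_def)
  qed
  show ?thesis unfolding Kill_def using Fsub[OF s st zV] r u by simp
qed

lemma out_zero:
  assumes s: "s \<in> Tset" and z: "z \<in> KK s" and st: "pleq s t" and t: "t \<notin> D"
  shows "F s t z = 0"
proof -
  have zV: "z \<in> V s" using z unfolding Kill_def by simp
  have tT: "t \<in> Tset" using T_up[OF s st] .
  then have "fst t \<notin> J1s \<or> snd t \<notin> J2s" using t unfolding D_def by simp
  then show ?thesis
  proof
    assume p: "fst t \<notin> J1s"
    have "F s t z = F (fst t, snd s) t (F s (fst t, snd s) z)"
      using Fcomp[OF s _ _ zV, of "(fst t, snd s)" t] st by (simp add: pleq_def)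
    also have "F s (fst t, snd s) z = 0" using z p st unfolding Kill_def pleq_def by simp
    finally show ?thesis using F0[OF T_up[OF s, of "(fst t, snd s)"], of t] st by (simp add: pleq_def)
  next
    assume p: "snd t \<notin> J2s"
    have "F s t z = F (fst s, snd t) t (F s (fst s, snd t) z)"
      using Fcomp[OF s _ _ zV, of "(fst s, snd t)" t] st by (simp add: pleq_def)
    also have "F s (fst s, snd t) z = 0" using z p st unfolding Kill_def pleq_def by simp
    finally show ?thesis using F0[OF T_up[OF s, of "(fst s, snd t)"], of t] st by (simp add: pleq_def)
  qed
qed

lemma ker_sub: assumes q: "q \<in> Tset" and r: "pleq q r" shows "vs.subspace {z \<in> V q. F q r z = 0}"
proof (rule vs.subspaceI)
  show "0 \<in> {z \<in> V q. F q r z = 0}" using vs.subspace_0[OF Vsub[OF q]] F0[OF q r] by simp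
  show "x + y \<in> {z \<in> V q. F q r z = 0}" if "x \<in> {z \<in> V q. F q r z = 0}" "y \<in> {z \<in> V q. F q r z = 0}" for x y
    using that vs.subspace_add[OF Vsub[OF q]] Fadd[OF q r] by simp
  show "scale c x \<in> {z \<in> V q. F q r z = 0}" if "x \<in> {z \<in> V q. F q r z = 0}" for c x
    using that vs.subspace_scale[OF Vsub[OF q]] Fscale[OF q r] by simp
qed

lemma STg:
  assumes q: "q \<in> Tset" and P: "P \<noteq> {}" "\<And>r. r \<in> P \<Longrightarrow> pleq q r"
    and ch: "\<And>r r'. r \<in> P \<Longrightarrow> r' \<in> P \<Longrightarrow> pleq r r' \<or> pleq r' r"
  shows "\<exists>r0\<in>P. \<forall>z\<in>V q. F q r0 z = 0 \<longrightarrow> (\<forall>r\<in>P. F q r z = 0)"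
proof -
  let ?k = "\<lambda>r. {z \<in> V q. F q r z = 0}"
  obtain W where W: "finite W" "W \<subseteq> V q" "vs.span W = V q" using Vfin[OF q] by blast
  have mono: "?k r \<subseteq> ?k r'" if "r \<in> P" "pleq r r'" for r r'
  proof
    fix z assume z: "z \<in> ?k r"
    have zV: "z \<in> V q" and z0: "F q r z = 0" using z by auto
    have "F q r' z = F r r' (F q r z)" using Fcomp[OF q P(2)[OF that(1)] that(2) zV] .
    also have "\<dots> = 0" using z0 F0[OF T_up[OF q P(2)[OF that(1)]] that(2)] by simp
    finally show "z \<in> ?k r'" using zV by simp
  qed
  have ch': "\<And>S S'. S \<in> ?k ` P \<Longrightarrow> S' \<in> ?k ` P \<Longrightarrow> S \<subseteq> S' \<or> S' \<subseteq> S"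
  proof -
    fix S S' assume "S \<in> ?k ` P" "S' \<in> ?k ` P"
    then obtain r r' where rr: "S = ?k r" "S' = ?k r'" "r \<in> P" "r' \<in> P" by blast
    from ch[OF rr(3,4)] show "S \<subseteq> S' \<or> S' \<subseteq> S"
    proof
      assume "pleq r r'" then have "S \<subseteq> S'" using mono[OF rr(3)] rr(1,2) by simp
      then show ?thesis ..
    next
      assume "pleq r' r" then have "S' \<subseteq> S" using mono[OF rr(4)] rr(1,2) by simp
      then show ?thesis ..
    qed
  qed
  have sb: "\<And>S. S \<in> ?k ` P \<Longrightarrow> vs.subspace S \<and> S \<subseteq> vs.span W"
  proof -
    fix S assume "S \<in> ?k ` P"
    then obtain r where r: "S = ?k r" "r \<in> P" by blast
    have "vs.subspace (?k r)" using ker_sub[OF q P(2)[OF r(2)]] .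
    moreover have "?k r \<subseteq> vs.span W" using W(3) by auto
    ultimately show "vs.subspace S \<and> S \<subseteq> vs.span W" using r(1) by simp
  qed
  have ne: "?k ` P \<noteq> {}" using P(1) by blast
  from LA_chainmin[OF ne sb W(1) ch'] obtain S0 where S0: "S0 \<in> ?k ` P" "\<forall>S\<in>?k ` P. S0 \<subseteq> S"
    by (rule bexE)
  from S0(1) obtain r0 where r0: "S0 = ?k r0" "r0 \<in> P" by (rule imageE)
  show ?thesis
  proof (intro bexI[OF _ r0(2)] ballI impI)
    fix z r assume z: "z \<in> V q" "F q r0 z = 0" and r: "r \<in> P"
    have "\<forall>x\<in>P. ?k r0 \<subseteq> ?k x" using S0(2) r0(1) by simp
    then have "?k r0 \<subseteq> ?k r" using r by (rule bspec)
    moreover have "z \<in> ?k r0" using z by simp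
    ultimately show "F q r z = 0" by blast
  qed
qed

lemma ST1:
  assumes q: "q \<in> D"
  shows "\<exists>p0. fst q \<le> p0 \<and> p0 \<notin> J1s \<and> (\<forall>z\<in>V q. F q (p0, snd q) z = 0 \<longrightarrow>
            (\<forall>p. fst q \<le> p \<longrightarrow> p \<notin> J1s \<longrightarrow> F q (p, snd q) z = 0))"
proof -
  let ?P = "{(p, snd q) | p. fst q \<le> p \<and> p \<notin> J1s}"
  have "x1 \<notin> J1s" using J1s_props(3) by blast
  moreover have "fst q \<le> x1" using D_bound[OF q] by simp
  ultimately have ne: "?P \<noteq> {}" by blast
  have ge: "\<And>r. r \<in> ?P \<Longrightarrow> pleq q r" by (auto simp: pleq_def)
  have ch: "\<And>r r'. r \<in> ?P \<Longrightarrow> r' \<in> ?P \<Longrightarrow> pleq r r' \<or> pleq r' r" by (auto simp: pleq_def)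
  obtain r0 where r0: "r0 \<in> ?P" "\<forall>z\<in>V q. F q r0 z = 0 \<longrightarrow> (\<forall>r\<in>?P. F q r z = 0)"
    using STg[OF D_T[OF q] ne ge ch] by (rule bexE)
  from r0(1) obtain p0 where p0: "r0 = (p0, snd q)" "fst q \<le> p0" "p0 \<notin> J1s" by blast
  show ?thesis
  proof (intro exI[of _ p0] conjI ballI impI allI)
    show "fst q \<le> p0" "p0 \<notin> J1s" by fact+
    fix z p assume z: "z \<in> V q" "F q (p0, snd q) z = 0" and p: "fst q \<le> p" "p \<notin> J1s"
    have "(p, snd q) \<in> ?P" using p by blast
    then show "F q (p, snd q) z = 0" using r0(2) z p0(1) by blast
  qed
qed

lemma ST2:
  assumes q: "q \<in> D"
  shows "\<exists>p0. snd q \<le> p0 \<and> p0 \<notin> J2s \<and> (\<forall>z\<in>V q. F q (fst q, p0) z = 0 \<longrightarrow>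
            (\<forall>p. snd q \<le> p \<longrightarrow> p \<notin> J2s \<longrightarrow> F q (fst q, p) z = 0))"
proof -
  let ?P = "{(fst q, p) | p. snd q \<le> p \<and> p \<notin> J2s}"
  have "y1 \<notin> J2s" using J2s_props(3) by blast
  moreover have "snd q \<le> y1" using D_bound[OF q] by simp
  ultimately have ne: "?P \<noteq> {}" by blast
  have ge: "\<And>r. r \<in> ?P \<Longrightarrow> pleq q r" by (auto simp: pleq_def)
  have ch: "\<And>r r'. r \<in> ?P \<Longrightarrow> r' \<in> ?P \<Longrightarrow> pleq r r' \<or> pleq r' r" by (auto simp: pleq_def)
  obtain r0 where r0: "r0 \<in> ?P" "\<forall>z\<in>V q. F q r0 z = 0 \<longrightarrow> (\<forall>r\<in>?P. F q r z = 0)"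
    using STg[OF D_T[OF q] ne ge ch] by (rule bexE)
  from r0(1) obtain p0 where p0: "r0 = (fst q, p0)" "snd q \<le> p0" "p0 \<notin> J2s" by blast
  show ?thesis
  proof (intro exI[of _ p0] conjI ballI impI allI)
    show "snd q \<le> p0" "p0 \<notin> J2s" by fact+
    fix z p assume z: "z \<in> V q" "F q (fst q, p0) z = 0" and p: "snd q \<le> p" "p \<notin> J2s"
    have "(fst q, p) \<in> ?P" using p by blast
    then show "F q (fst q, p) z = 0" using r0(2) z p0(1) by blast
  qed
qed

lemma upkill:
  assumes q: "(qx, qy) \<in> D" and h: "0 < h" and n2: "(qx, qy + h) \<in> D" and z: "z \<in> V (qx, qy)"
    and zu: "F (qx, qy) (qx, qy + h) z = u" and u: "u \<in> KK (qx, qy + h)"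
    and p: "qy \<le> p" "p \<notin> J2s"
  shows "F (qx, qy) (qx, p) z = 0"
proof -
  have hJ: "qy + h \<in> J2s" using n2 unfolding D_def by simp
  have "qy + h \<le> p"
  proof (rule ccontr)
    assume "\<not> qy + h \<le> p" then have "p \<le> qy + h" by simp
    then have "p \<in> J2s" using hJ J2s_props(1) unfolding down_closed_def by blast
    with p(2) show False by simp
  qed
  then have "F (qx, qy) (qx, p) z = F (qx, qy + h) (qx, p) u"
    using Fcomp[OF D_T[OF q] pq[of qx qx qy "qy+h"] pq[of qx qx "qy+h" p] z] zu h by simp
  also have "\<dots> = 0" using u p \<open>qy + h \<le> p\<close> unfolding Kill_def by simp
  finally show ?thesis .
qed

lemma rightkill:
  assumes q: "(qx, qy) \<in> D" and h: "0 < h" and n1: "(qx + h, qy) \<in> D" and z: "z \<in> V (qx, qy)"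
    and zw: "F (qx, qy) (qx + h, qy) z = w" and w: "w \<in> KK (qx + h, qy)"
    and p: "qx \<le> p" "p \<notin> J1s"
  shows "F (qx, qy) (p, qy) z = 0"
proof -
  have hJ: "qx + h \<in> J1s" using n1 unfolding D_def by simp
  have "qx + h \<le> p"
  proof (rule ccontr)
    assume "\<not> qx + h \<le> p" then have "p \<le> qx + h" by simp
    then have "p \<in> J1s" using hJ J1s_props(1) unfolding down_closed_def by blast
    with p(2) show False by simp
  qed
  then have "F (qx, qy) (p, qy) z = F (qx + h, qy) (p, qy) w"
    using Fcomp[OF D_T[OF q] pq[of qx "qx+h" qy qy] pq[of "qx+h" p qy qy] z] zw h by simp
  also have "\<dots> = 0" using w p \<open>qx + h \<le> p\<close> unfolding Kill_def by simp
  finally show ?thesis .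
qed

lemma KME:
  assumes q: "(qx, qy) \<in> D" and h: "0 < h"
    and w1: "(qx + h, qy) \<in> D \<Longrightarrow> w \<in> KK (qx + h, qy)"
    and u1: "(qx, qy + h) \<in> D \<Longrightarrow> u \<in> KK (qx, qy + h)"
    and ag: "(qx + h, qy) \<in> D \<Longrightarrow> (qx, qy + h) \<in> D \<Longrightarrow> (qx + h, qy + h) \<in> D \<Longrightarrow>
              F (qx + h, qy) (qx + h, qy + h) w = F (qx, qy + h) (qx + h, qy + h) u"
  shows "\<exists>z\<in>KK (qx, qy). ((qx + h, qy) \<in> D \<longrightarrow> F (qx, qy) (qx + h, qy) z = w) \<and>
                           ((qx, qy + h) \<in> D \<longrightarrow> F (qx, qy) (qx, qy + h) z = u)"
proof -
  have qT: "(qx, qy) \<in> Tset" using D_T[OF q] .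
  have T1: "(qx + h, qy) \<in> Tset" "(qx, qy + h) \<in> Tset" using T_up[OF qT] h by (auto simp: pleq_def)
  consider "(qx + h, qy) \<in> D" "(qx, qy + h) \<in> D" | "(qx + h, qy) \<notin> D" "(qx, qy + h) \<in> D"
    | "(qx + h, qy) \<in> D" "(qx, qy + h) \<notin> D" | "(qx + h, qy) \<notin> D" "(qx, qy + h) \<notin> D" by blast
  then show ?thesis
  proof cases
    case 1
    have wK: "w \<in> KK (qx + h, qy)" and uK: "u \<in> KK (qx, qy + h)" using w1 u1 1 by auto
    have wV: "w \<in> V (qx + h, qy)" and uV: "u \<in> V (qx, qy + h)" using wK uK unfolding Kill_def by auto
    have agr: "F (qx, qy + h) (qx + h, qy + h) u = F (qx + h, qy) (qx + h, qy + h) w"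
    proof (cases "(qx + h, qy + h) \<in> D")
      case True then show ?thesis using ag 1 by simp
    next
      case False
      have "F (qx + h, qy) (qx + h, qy + h) w = 0" using out_zero[OF T1(1) wK _ False] h by (simp add: pleq_def)
      moreover have "F (qx, qy + h) (qx + h, qy + h) u = 0" using out_zero[OF T1(2) uK _ False] h by (simp add: pleq_def)
      ultimately show ?thesis by simp
    qed
    obtain z where z: "z \<in> V (qx, qy)" "F (qx, qy) (qx, qy + h) z = u" "F (qx, qy) (qx + h, qy) z = w"
      using ME[of qx "qx + h" qy "qy + h" u w] h qT uV wV agr by auto
    have "z \<in> KK (qx, qy)" unfolding Kill_def
      using z(1) rightkill[OF q h 1(1) z(1) z(3) wK] upkill[OF q h 1(2) z(1) z(2) uK] by simp
    then show ?thesis using z by blast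
  next
    case 2
    have uK: "u \<in> KK (qx, qy + h)" using u1 2 by auto
    have uV: "u \<in> V (qx, qy + h)" using uK unfolding Kill_def by auto
    obtain p0 where p0: "qx \<le> p0" "p0 \<notin> J1s" "\<forall>z\<in>V (qx, qy). F (qx, qy) (p0, qy) z = 0 \<longrightarrow>
            (\<forall>p. qx \<le> p \<longrightarrow> p \<notin> J1s \<longrightarrow> F (qx, qy) (p, qy) z = 0)"
      using ST1[OF q] unfolding fst_conv snd_conv by blast
    have Tp: "(p0, qy) \<in> Tset" using T_up[OF qT] p0(1) by (auto simp: pleq_def)
    have agr: "F (qx, qy + h) (p0, qy + h) u = F (p0, qy) (p0, qy + h) 0"
      using uK p0(1,2) F0[OF Tp, of "(p0, qy + h)"] h unfolding Kill_def by (simp add: pleq_def)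
    obtain z where z: "z \<in> V (qx, qy)" "F (qx, qy) (qx, qy + h) z = u" "F (qx, qy) (p0, qy) z = 0"
      using ME[of qx p0 qy "qy + h" u 0] h qT uV agr p0(1,2) vs.subspace_0[OF Vsub[OF Tp]] by auto
    have rk: "\<forall>p. qx \<le> p \<longrightarrow> p \<notin> J1s \<longrightarrow> F (qx, qy) (p, qy) z = 0"
      using p0(3) z(1) z(3) by blast
    have "z \<in> KK (qx, qy)" unfolding Kill_def
      using z(1) rk upkill[OF q h 2(2) z(1) z(2) uK] by simp
    then show ?thesis using z 2 by blast
  next
    case 3
    have wK: "w \<in> KK (qx + h, qy)" using w1 3 by auto
    have wV: "w \<in> V (qx + h, qy)" using wK unfolding Kill_def by auto
    obtain p0 where p0: "qy \<le> p0" "p0 \<notin> J2s" "\<forall>z\<in>V (qx, qy). F (qx, qy) (qx, p0) z = 0 \<longrightarrow>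
            (\<forall>p. qy \<le> p \<longrightarrow> p \<notin> J2s \<longrightarrow> F (qx, qy) (qx, p) z = 0)"
      using ST2[OF q] unfolding fst_conv snd_conv by blast
    have Tp: "(qx, p0) \<in> Tset" using T_up[OF qT] p0(1) by (auto simp: pleq_def)
    have agr: "F (qx, p0) (qx + h, p0) 0 = F (qx + h, qy) (qx + h, p0) w"
      using wK p0(1,2) F0[OF Tp, of "(qx + h, p0)"] h unfolding Kill_def by (simp add: pleq_def)
    obtain z where z: "z \<in> V (qx, qy)" "F (qx, qy) (qx, p0) z = 0" "F (qx, qy) (qx + h, qy) z = w"
      using ME[of qx "qx + h" qy p0 0 w] h qT wV agr p0(1,2) vs.subspace_0[OF Vsub[OF Tp]] by auto
    have uk: "\<forall>p. qy \<le> p \<longrightarrow> p \<notin> J2s \<longrightarrow> F (qx, qy) (qx, p) z = 0"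
      using p0(3) z(1) z(2) by blast
    have "z \<in> KK (qx, qy)" unfolding Kill_def
      using z(1) uk rightkill[OF q h 3(1) z(1) z(3) wK] by simp
    then show ?thesis using z 3 by blast
  next
    case 4
    have "0 \<in> KK (qx, qy)" using Kill_sub[OF qT] vs.subspace_0 by blast
    then show ?thesis using 4 by blast
  qed
qed

definition ongrid :: "real \<Rightarrow> real \<times> real \<Rightarrow> bool" where
  "ongrid h t \<longleftrightarrow> (\<exists>i j::int. t = (x0 + h * of_int i, y0 + h * of_int j))"

definition "Sg h = {t \<in> D. ongrid h t}"

definition comp :: "(real \<times> real) set \<Rightarrow> (real \<times> real \<Rightarrow> 'v) \<Rightarrow> bool" where
  "comp X m \<longleftrightarrow> (\<forall>s\<in>X. m s \<in> KK s) \<and> (\<forall>s\<in>X. \<forall>t\<in>X. pleq s t \<longrightarrow> F s t (m s) = m t)"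

lemma int_bounds:
  fixes h c d :: real and i :: int
  assumes h: "0 < h" and lo: "c < h * of_int i" and hi: "h * of_int i < d"
  shows "i \<in> {\<lfloor>c / h\<rfloor>..\<lceil>d / h\<rceil>}"
proof -
  have "c / h < of_int i" using lo h by (simp add: pos_divide_less_eq mult.commute)
  then have "\<lfloor>c / h\<rfloor> \<le> i" by (simp add: floor_le_iff)
  moreover have "of_int i < d / h" using hi h by (simp add: pos_less_divide_eq mult.commute)
  then have "i \<le> \<lceil>d / h\<rceil>" by (simp add: le_ceiling_iff)
  ultimately show ?thesis by simp
qed

lemma finite_Sg: assumes h: "0 < h" shows "finite (Sg h)"
proof -
  let ?I = "{\<lfloor>(- y1 - x0) / h\<rfloor>..\<lceil>(x1 - x0) / h\<rceil>}"
  let ?J = "{\<lfloor>(- x1 - y0) / h\<rfloor>..\<lceil>(y1 - y0) / h\<rceil>}"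
  have "Sg h \<subseteq> (\<lambda>(i, j). (x0 + h * of_int i, y0 + h * of_int j)) ` (?I \<times> ?J)"
  proof
    fix t assume t: "t \<in> Sg h"
    then obtain i j :: int where ij: "t = (x0 + h * of_int i, y0 + h * of_int j)"
      unfolding Sg_def ongrid_def by blast
    have b: "fst t < x1" "snd t < y1" "0 < fst t + snd t" using D_bound t unfolding Sg_def by auto
    have "i \<in> ?I" using int_bounds[OF h, of "- y1 - x0" i "x1 - x0"] b ij by simp
    moreover have "j \<in> ?J" using int_bounds[OF h, of "- x1 - y0" j "y1 - y0"] b ij by simp
    ultimately show "t \<in> (\<lambda>(i, j). (x0 + h * of_int i, y0 + h * of_int j)) ` (?I \<times> ?J)"
      using ij by force
  qed
  then show ?thesis by (rule finite_subset) simp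
qed

lemma grid_step:
  assumes h: "0 < h" and q: "ongrid h q" and t: "ongrid h t" and qt: "pleq q t" and ne: "t \<noteq> q"
  shows "fst q + h \<le> fst t \<or> snd q + h \<le> snd t"
proof -
  obtain i j :: int where tij: "t = (x0 + h * of_int i, y0 + h * of_int j)" using t unfolding ongrid_def by blast
  obtain i' j' :: int where qij: "q = (x0 + h * of_int i', y0 + h * of_int j')" using q unfolding ongrid_def by blast
  have "h * of_int i' \<le> h * of_int i" "h * of_int j' \<le> h * of_int j" using qt tij qij by (auto simp: pleq_def)
  then have le: "i' \<le> i" "j' \<le> j" using h by (simp_all add: mult_le_cancel_left_pos)
  have "i' + 1 \<le> i \<or> j' + 1 \<le> j" using ne le tij qij by auto
  then show ?thesis
  proof
    assume "i' + 1 \<le> i"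
    then have "real_of_int i' + 1 \<le> of_int i" by linarith
    then have "h * (of_int i' + 1) \<le> h * of_int i" using h by (simp add: mult_le_cancel_left_pos)
    then show ?thesis using tij qij by (simp add: algebra_simps)
  next
    assume "j' + 1 \<le> j"
    then have "real_of_int j' + 1 \<le> of_int j" by linarith
    then have "h * (of_int j' + 1) \<le> h * of_int j" using h by (simp add: mult_le_cancel_left_pos)
    then show ?thesis using tij qij by (simp add: algebra_simps)
  qed
qed

lemma sum_lt: "pleq q t \<Longrightarrow> t \<noteq> q \<Longrightarrow> fst q + snd q < fst t + snd t"
  by (cases q, cases t) (auto simp: pleq_def)

lemma ongrid_n1: "ongrid h (qx, qy) \<Longrightarrow> ongrid h (qx + h, qy)"
proof -
  assume "ongrid h (qx, qy)"
  then obtain i j :: int where "(qx, qy) = (x0 + h * of_int i, y0 + h * of_int j)" unfolding ongrid_def by blast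
  then have "(qx + h, qy) = (x0 + h * of_int (i + 1), y0 + h * of_int j)" by (simp add: algebra_simps)
  then show ?thesis unfolding ongrid_def by blast
qed

lemma ongrid_n2: "ongrid h (qx, qy) \<Longrightarrow> ongrid h (qx, qy + h)"
proof -
  assume "ongrid h (qx, qy)"
  then obtain i j :: int where "(qx, qy) = (x0 + h * of_int i, y0 + h * of_int j)" unfolding ongrid_def by blast
  then have "(qx, qy + h) = (x0 + h * of_int i, y0 + h * of_int (j + 1))" by (simp add: algebra_simps)
  then show ?thesis unfolding ongrid_def by blast
qed

lemma finite_max:
  fixes f :: "real \<times> real \<Rightarrow> real"
  assumes "finite X" "X \<noteq> {}" shows "\<exists>q\<in>X. \<forall>t\<in>X. f t \<le> f q"
proof -
  have "Max (f ` X) \<in> f ` X" using assms by simp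
  then obtain q where q: "q \<in> X" "f q = Max (f ` X)" by auto
  have "\<forall>t\<in>X. f t \<le> f q" using q(2) assms by simp
  then show ?thesis using q(1) by blast
qed

definition upcl :: "(real \<times> real) set \<Rightarrow> (real \<times> real) set \<Rightarrow> bool" where
  "upcl X U \<longleftrightarrow> (\<forall>u\<in>U. \<forall>t\<in>X. pleq u t \<longrightarrow> t \<in> U)"

lemma GE_step:
  assumes h: "0 < h" and U: "U \<subseteq> Sg h" "upcl (Sg h) U" and m: "comp U m"
    and q: "q \<in> Sg h - U" and qmax: "\<forall>t\<in>Sg h - U. fst t + snd t \<le> fst q + snd q"
  shows "\<exists>z. comp (insert q U) (m(q := z)) \<and> upcl (Sg h) (insert q U)"
proof -
  obtain qx qy where qq: "q = (qx, qy)" by (cases q)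
  have qD: "(qx, qy) \<in> D" and qg: "ongrid h (qx, qy)" and qU: "q \<notin> U" using q qq unfolding Sg_def by auto
  have inU: "t \<in> U" if "t \<in> D" "ongrid h t" "pleq q t" "t \<noteq> q" for t
  proof (rule ccontr)
    assume "t \<notin> U"
    then have "t \<in> Sg h - U" using that unfolding Sg_def by simp
    then have "fst t + snd t \<le> fst q + snd q" using qmax by blast
    moreover have "fst q + snd q < fst t + snd t" using sum_lt that by blast
    ultimately show False by simp
  qed
  have n1U: "(qx + h, qy) \<in> U" if "(qx + h, qy) \<in> D"
    using inU[OF that ongrid_n1[OF qg]] h qq by (simp add: pleq_def)
  have n2U: "(qx, qy + h) \<in> U" if "(qx, qy + h) \<in> D"
    using inU[OF that ongrid_n2[OF qg]] h qq by (simp add: pleq_def)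
  have dU: "(qx + h, qy + h) \<in> U" if "(qx + h, qy + h) \<in> D"
    using inU[OF that ongrid_n2[OF ongrid_n1[OF qg]]] h qq by (simp add: pleq_def)
  have mK: "\<And>s. s \<in> U \<Longrightarrow> m s \<in> KK s" and mc: "\<And>s t. s \<in> U \<Longrightarrow> t \<in> U \<Longrightarrow> pleq s t \<Longrightarrow> F s t (m s) = m t"
    using m unfolding comp_def by auto
  have ag: "F (qx + h, qy) (qx + h, qy + h) (m (qx + h, qy)) = F (qx, qy + h) (qx + h, qy + h) (m (qx, qy + h))"
    if "(qx + h, qy) \<in> D" "(qx, qy + h) \<in> D" "(qx + h, qy + h) \<in> D"
  proof -
    have "F (qx + h, qy) (qx + h, qy + h) (m (qx + h, qy)) = m (qx + h, qy + h)"
      using mc[OF n1U[OF that(1)] dU[OF that(3)]] h by (simp add: pleq_def)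
    moreover have "F (qx, qy + h) (qx + h, qy + h) (m (qx, qy + h)) = m (qx + h, qy + h)"
      using mc[OF n2U[OF that(2)] dU[OF that(3)]] h by (simp add: pleq_def)
    ultimately show ?thesis by simp
  qed
  obtain z where z: "z \<in> KK (qx, qy)" "(qx + h, qy) \<in> D \<longrightarrow> F (qx, qy) (qx + h, qy) z = m (qx + h, qy)"
    "(qx, qy + h) \<in> D \<longrightarrow> F (qx, qy) (qx, qy + h) z = m (qx, qy + h)"
    using KME[OF qD h, of "m (qx + h, qy)" "m (qx, qy + h)"] mK n1U n2U ag by blast
  have zV: "z \<in> V q" using z(1) qq unfolding Kill_def by simp
  have UD: "\<And>t. t \<in> U \<Longrightarrow> t \<in> D \<and> ongrid h t" using U(1) unfolding Sg_def by blast
  have qt: "F q t z = m t" if t: "t \<in> U" "pleq q t" for t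
  proof -
    have tq: "t \<noteq> q" using t qU by blast
    have tD: "t \<in> D" "ongrid h t" using UD[OF t(1)] by auto
    have qT: "q \<in> Tset" using qD qq D_T by simp
    from grid_step[OF h qg _ _ tq[unfolded qq]] tD(2) t(2) qq
    have "qx + h \<le> fst t \<or> qy + h \<le> snd t" by simp
    then show ?thesis
    proof
      assume c: "qx + h \<le> fst t"
      have le: "pleq (qx + h, qy) t" using c t(2) qq by (simp add: pleq_def)
      have n1D: "(qx + h, qy) \<in> D" using D_down[OF tD(1) _ le] T_up[OF qT] h qq by (simp add: pleq_def)
      have "F q t z = F (qx + h, qy) t (F q (qx + h, qy) z)"
        using Fcomp[OF qT _ le zV] h qq by (simp add: pleq_def)
      also have "\<dots> = F (qx + h, qy) t (m (qx + h, qy))" using z(2) n1D qq by simp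
      also have "\<dots> = m t" using mc[OF n1U[OF n1D] t(1) le] .
      finally show ?thesis .
    next
      assume c: "qy + h \<le> snd t"
      have le: "pleq (qx, qy + h) t" using c t(2) qq by (simp add: pleq_def)
      have n2D: "(qx, qy + h) \<in> D" using D_down[OF tD(1) _ le] T_up[OF qT] h qq by (simp add: pleq_def)
      have "F q t z = F (qx, qy + h) t (F q (qx, qy + h) z)"
        using Fcomp[OF qT _ le zV] h qq by (simp add: pleq_def)
      also have "\<dots> = F (qx, qy + h) t (m (qx, qy + h))" using z(3) n2D qq by simp
      also have "\<dots> = m t" using mc[OF n2U[OF n2D] t(1) le] .
      finally show ?thesis .
    qed
  qed
  have c1: "comp (insert q U) (m(q := z))"
    unfolding comp_def
  proof (intro conjI ballI impI)
    fix s assume "s \<in> insert q U"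
    then show "(m(q := z)) s \<in> KK s"
    proof
      assume "s = q" then show ?thesis using z(1) qq by simp
    next
      assume sU: "s \<in> U" then have "s \<noteq> q" using qU by blast
      then show ?thesis using mK[OF sU] by simp
    qed
  next
    fix s t assume s: "s \<in> insert q U" and t: "t \<in> insert q U" and st: "pleq s t"
    show "F s t ((m(q := z)) s) = (m(q := z)) t"
    proof (cases "s = q")
      case True
      show ?thesis
      proof (cases "t = q")
        case True
        then show ?thesis using \<open>s = q\<close> Fid[OF D_T[OF qD[folded qq]] zV] by simp
      next
        case False
        then have "t \<in> U" using t by simp
        then show ?thesis using qt[of t] st True False by simp
      qed
    next
      case False
      then have sU: "s \<in> U" using s by simp
      show ?thesis
      proof (cases "t = q")
        case True
        have "q \<in> U" using U(2) sU st True q unfolding upcl_def by blast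
        then show ?thesis using qU by simp
      next
        case False
        then show ?thesis using mc[OF sU _ st] t \<open>s \<noteq> q\<close> by simp
      qed
    qed
  qed
  have c2: "upcl (Sg h) (insert q U)" unfolding upcl_def
  proof (intro ballI impI)
    fix u t assume u: "u \<in> insert q U" and t: "t \<in> Sg h" and ut: "pleq u t"
    show "t \<in> insert q U"
    proof (cases "u = q")
      case True
      show ?thesis
      proof (cases "t = q")
        case False
        then have "t \<in> U" using inU[of t] t ut True unfolding Sg_def by blast
        then show ?thesis by simp
      qed simp
    next
      case False
      then show ?thesis using U(2) u t ut unfolding upcl_def by blast
    qed
  qed
  show ?thesis using c1 c2 by blast
qed

lemma GE:
  assumes h: "0 < h"
  shows "U \<subseteq> Sg h \<Longrightarrow> upcl (Sg h) U \<Longrightarrow> comp U m \<Longrightarrow> \<exists>m'. comp (Sg h) m' \<and> (\<forall>u\<in>U. m' u = m u)"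
proof (induction "card (Sg h - U)" arbitrary: U m rule: less_induct)
  case less
  show ?case
  proof (cases "Sg h - U = {}")
    case True
    then have "U = Sg h" using less.prems(1) by blast
    then show ?thesis using less.prems(3) by blast
  next
    case False
    have fin: "finite (Sg h - U)" using finite_Sg[OF h] by simp
    obtain q where q: "q \<in> Sg h - U" "\<forall>t\<in>Sg h - U. fst t + snd t \<le> fst q + snd q"
      using finite_max[OF fin False, of "\<lambda>t. fst t + snd t"] by blast
    obtain z where z: "comp (insert q U) (m(q := z))" "upcl (Sg h) (insert q U)"
      using GE_step[OF h less.prems(1,2,3) q] by blast
    have sub: "insert q U \<subseteq> Sg h" using less.prems(1) q(1) by blast
    have "Sg h - insert q U = (Sg h - U) - {q}" by blast
    then have lt: "card (Sg h - insert q U) < card (Sg h - U)"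
      using card_Diff1_less[OF fin q(1)] by simp
    obtain m' where m': "comp (Sg h) m'" "\<forall>u\<in>insert q U. m' u = (m(q := z)) u"
      using less.hyps[OF lt sub z(2) z(1)] by blast
    have "\<forall>u\<in>U. m' u = m u" using m'(2) q(1) by auto
    then show ?thesis using m'(1) by blast
  qed
qed

lemma ongrid_join: "0 < h \<Longrightarrow> ongrid h s \<Longrightarrow> ongrid h t \<Longrightarrow> ongrid h (join s t)"
proof -
  assume h: "0 < h" and s: "ongrid h s" and t: "ongrid h t"
  obtain i j :: int where tij: "t = (x0 + h * of_int i, y0 + h * of_int j)" using t unfolding ongrid_def by blast
  obtain i' j' :: int where sij: "s = (x0 + h * of_int i', y0 + h * of_int j')" using s unfolding ongrid_def by blast
  have "max (x0 + h * of_int i') (x0 + h * of_int i) = x0 + h * of_int (max i' i)"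
    using h by (auto simp: max_def mult_le_cancel_left_pos)
  moreover have "max (y0 + h * of_int j') (y0 + h * of_int j) = y0 + h * of_int (max j' j)"
    using h by (auto simp: max_def mult_le_cancel_left_pos)
  ultimately have "join s t = (x0 + h * of_int (max i' i), y0 + h * of_int (max j' j))"
    using sij tij by (simp add: join_def)
  then show ?thesis unfolding ongrid_def by blast
qed

lemma Sg_join: "0 < h \<Longrightarrow> s \<in> Sg h \<Longrightarrow> t \<in> Sg h \<Longrightarrow> join s t \<in> Sg h"
  using ongrid_join D_join unfolding Sg_def by blast

lemma GE2:
  assumes h: "0 < h" and P: "P \<subseteq> Sg h" and jc: "\<And>s s'. s \<in> P \<Longrightarrow> s' \<in> P \<Longrightarrow> join s s' \<in> P"
    and m: "comp P m"
  shows "\<exists>m'. comp (Sg h) m' \<and> (\<forall>p\<in>P. m' p = m p)"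
proof -
  define U where "U = {t \<in> Sg h. \<exists>p\<in>P. pleq p t}"
  define ch where "ch t = (SOME p. p \<in> P \<and> pleq p t)" for t
  define mu where "mu t = F (ch t) t (m (ch t))" for t
  have mK: "\<And>s. s \<in> P \<Longrightarrow> m s \<in> KK s" and mc: "\<And>s t. s \<in> P \<Longrightarrow> t \<in> P \<Longrightarrow> pleq s t \<Longrightarrow> F s t (m s) = m t"
    using m unfolding comp_def by auto
  have PD: "\<And>p. p \<in> P \<Longrightarrow> p \<in> Tset" using P D_T unfolding Sg_def by blast
  have mV: "\<And>p. p \<in> P \<Longrightarrow> m p \<in> V p" using mK unfolding Kill_def by blast
  have chp: "ch t \<in> P \<and> pleq (ch t) t" if "t \<in> U" for t
  proof -
    have "\<exists>p. p \<in> P \<and> pleq p t" using that unfolding U_def by blast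
    then show ?thesis unfolding ch_def by (rule someI_ex)
  qed
  have via: "F p t (m p) = F (join p p') t (m (join p p'))"
    if "p \<in> P" "p' \<in> P" "pleq p t" "pleq p' t" for p p' t
  proof -
    have jl: "pleq (join p p') t" using join_le that by blast
    have "F p t (m p) = F (join p p') t (F p (join p p') (m p))"
      using Fcomp[OF PD[OF that(1)] join_ge(1) jl mV[OF that(1)]] .
    also have "F p (join p p') (m p) = m (join p p')" using mc[OF that(1) jc[OF that(1,2)] join_ge(1)] .
    finally show ?thesis .
  qed
  have key: "mu t = F p t (m p)" if t: "t \<in> U" and p: "p \<in> P" "pleq p t" for t p
  proof -
    have c: "ch t \<in> P" "pleq (ch t) t" using chp[OF t] by auto
    have "mu t = F (join (ch t) p) t (m (join (ch t) p))" unfolding mu_def using via[OF c(1) p(1) c(2) p(2)] .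
    also have "\<dots> = F (join p (ch t)) t (m (join p (ch t)))" by (simp add: join_def max.commute)
    also have "\<dots> = F p t (m p)" using via[OF p(1) c(1) p(2) c(2)] by simp
    finally show ?thesis .
  qed
  have UT: "\<And>t. t \<in> U \<Longrightarrow> t \<in> Tset" unfolding U_def Sg_def using D_T by blast
  have cU: "comp U mu" unfolding comp_def
  proof (intro conjI ballI impI)
    fix s assume s: "s \<in> U"
    have c: "ch s \<in> P" "pleq (ch s) s" using chp[OF s] by auto
    show "mu s \<in> KK s" unfolding mu_def using push_Kill[OF PD[OF c(1)] mK[OF c(1)] c(2)] .
  next
    fix s t assume s: "s \<in> U" and t: "t \<in> U" and st: "pleq s t"
    have c: "ch s \<in> P" "pleq (ch s) s" using chp[OF s] by auto
    have ct: "pleq (ch s) t" using pleq_trans[OF c(2) st] .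
    have "mu t = F (ch s) t (m (ch s))" using key[OF t c(1) ct] .
    also have "\<dots> = F s t (F (ch s) s (m (ch s)))" using Fcomp[OF PD[OF c(1)] c(2) st mV[OF c(1)]] .
    finally show "F s t (mu s) = mu t" unfolding mu_def by simp
  qed
  have uU: "upcl (Sg h) U" unfolding upcl_def U_def using pleq_trans by blast
  have UU: "U \<subseteq> Sg h" unfolding U_def by blast
  obtain m' where m': "comp (Sg h) m'" "\<forall>u\<in>U. m' u = mu u" using GE[OF h UU uU cU] by blast
  have "\<forall>p\<in>P. m' p = m p"
  proof
    fix p assume p: "p \<in> P"
    have pU: "p \<in> U" unfolding U_def using P p pleq_refl by blast
    have "m' p = mu p" using m'(2) pU by blast
    also have "\<dots> = F p p (m p)" using key[OF pU p] by simp
    also have "\<dots> = m p" using Fid[OF PD[OF p] mV[OF p]] .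
    finally show "m' p = m p" .
  qed
  then show ?thesis using m'(1) by blast
qed

definition hh :: "nat \<Rightarrow> real" where "hh n = 1 / 2 ^ n"

lemma hh_pos: "0 < hh n" by (simp add: hh_def)

lemma Sg_Suc: "Sg (hh n) \<subseteq> Sg (hh (Suc n))"
proof
  fix t assume t: "t \<in> Sg (hh n)"
  then obtain i j :: int where ij: "t = (x0 + hh n * of_int i, y0 + hh n * of_int j)"
    unfolding Sg_def ongrid_def by blast
  have "hh n = hh (Suc n) * 2" by (simp add: hh_def)
  then have "t = (x0 + hh (Suc n) * of_int (2 * i), y0 + hh (Suc n) * of_int (2 * j))"
    using ij by simp
  then show "t \<in> Sg (hh (Suc n))" using t unfolding Sg_def ongrid_def by blast
qed

lemma Sg_mono: "n \<le> N \<Longrightarrow> Sg (hh n) \<subseteq> Sg (hh N)"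
proof (induction N)
  case 0 then show ?case by simp
next
  case (Suc N)
  then show ?case using Sg_Suc[of N] by (cases "n = Suc N") auto
qed

definition "ee = (SOME e. e \<in> KK a \<and> e \<noteq> 0)"

lemma ee: "ee \<in> KK a" "ee \<noteq> 0"
proof -
  have "\<exists>e. e \<in> KK a \<and> e \<noteq> 0" using J2s_props(4) Kill_sub[OF aT] vs.subspace_0 by blast
  then have "ee \<in> KK a \<and> ee \<noteq> 0" unfolding ee_def by (rule someI_ex)
  then show "ee \<in> KK a" "ee \<noteq> 0" by auto
qed

primrec mm :: "nat \<Rightarrow> real \<times> real \<Rightarrow> 'v" where
  "mm 0 = (SOME m. comp (Sg (hh 0)) m \<and> m a = ee)"
| "mm (Suc n) = (SOME m. comp (Sg (hh (Suc n))) m \<and> (\<forall>t\<in>Sg (hh n). m t = mm n t))"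

lemma a_Sg: "a \<in> Sg h"
proof -
  have "a = (x0 + h * of_int (0::int), y0 + h * of_int (0::int))" by simp
  then show ?thesis using a_D unfolding Sg_def ongrid_def by blast
qed

lemma mm_ok: "comp (Sg (hh n)) (mm n) \<and> mm n a = ee"
proof (induction n)
  case 0
  have c: "comp {a} (\<lambda>_. ee)" unfolding comp_def using ee(1) Fid[OF aT] unfolding Kill_def by auto
  have jc: "\<And>s s'. s \<in> {a} \<Longrightarrow> s' \<in> {a} \<Longrightarrow> join s s' \<in> {a}" by (simp add: join_def)
  have "{a} \<subseteq> Sg (hh 0)" using a_Sg by simp
  from GE2[OF hh_pos[of 0] this jc c] have "\<exists>m. comp (Sg (hh 0)) m \<and> m a = ee" by simp
  then show ?case unfolding mm.simps by (rule someI_ex)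
next
  case (Suc n)
  have jc: "\<And>s s'. s \<in> Sg (hh n) \<Longrightarrow> s' \<in> Sg (hh n) \<Longrightarrow> join s s' \<in> Sg (hh n)"
    using Sg_join[OF hh_pos] .
  have "\<exists>m. comp (Sg (hh (Suc n))) m \<and> (\<forall>t\<in>Sg (hh n). m t = mm n t)"
    using GE2[OF hh_pos[of "Suc n"] Sg_Suc[of n] jc conjunct1[OF Suc.IH]] .
  then have "comp (Sg (hh (Suc n))) (mm (Suc n)) \<and> (\<forall>t\<in>Sg (hh n). mm (Suc n) t = mm n t)"
    unfolding mm.simps by (rule someI_ex)
  then show ?case using Suc.IH a_Sg by simp
qed

lemma mm_ext: "n \<le> N \<Longrightarrow> t \<in> Sg (hh n) \<Longrightarrow> mm N t = mm n t"
proof (induction N)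
  case 0 then show ?case by simp
next
  case (Suc N)
  have jc: "\<And>s s'. s \<in> Sg (hh N) \<Longrightarrow> s' \<in> Sg (hh N) \<Longrightarrow> join s s' \<in> Sg (hh N)"
    using Sg_join[OF hh_pos] .
  have "\<exists>m. comp (Sg (hh (Suc N))) m \<and> (\<forall>t\<in>Sg (hh N). m t = mm N t)"
    using GE2[OF hh_pos[of "Suc N"] Sg_Suc[of N] jc conjunct1[OF mm_ok[of N]]] .
  then have ext: "\<forall>t\<in>Sg (hh N). mm (Suc N) t = mm N t"
    unfolding mm.simps by (rule someI_ex[THEN conjunct2])
  show ?case
  proof (cases "n = Suc N")
    case False
    then have "n \<le> N" using Suc.prems by simp
    then have "mm N t = mm n t" using Suc.IH Suc.prems(2) by simp
    moreover have "t \<in> Sg (hh N)" using Sg_mono[OF \<open>n \<le> N\<close>] Suc.prems(2) by blast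
    ultimately show ?thesis using ext by simp
  qed simp
qed

lemma cover: assumes t: "t \<in> D" shows "\<exists>n g. g \<in> Sg (hh n) \<and> pleq g t"
proof -
  define \<delta> where "\<delta> = fst t + snd t"
  have dpos: "0 < \<delta>" using D_bound[OF t] unfolding \<delta>_def by simp
  obtain n where n: "(1/2::real) ^ n < \<delta> / 2" using real_arch_pow_inv[of "\<delta> / 2" "1/2"] dpos by auto
  define h where "h = hh n"
  have h: "0 < h" "h < \<delta> / 2" using n hh_pos unfolding h_def hh_def by (auto simp: power_one_over)
  define i where "i = \<lfloor>(fst t - x0) / h\<rfloor>"
  define j where "j = \<lfloor>(snd t - y0) / h\<rfloor>"
  have i1: "h * of_int i \<le> fst t - x0"
  proof -
    have "of_int i \<le> (fst t - x0) / h" unfolding i_def by simp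
    then show ?thesis using h(1) by (simp add: pos_le_divide_eq mult.commute)
  qed
  have i2: "fst t - x0 - h < h * of_int i"
  proof -
    have "(fst t - x0) / h - 1 < of_int i" unfolding i_def by linarith
    then have "(fst t - x0 - h) / h < of_int i" using h(1) by (simp add: diff_divide_distrib)
    then show ?thesis using h(1) by (simp add: pos_divide_less_eq mult.commute)
  qed
  have j1: "h * of_int j \<le> snd t - y0"
  proof -
    have "of_int j \<le> (snd t - y0) / h" unfolding j_def by simp
    then show ?thesis using h(1) by (simp add: pos_le_divide_eq mult.commute)
  qed
  have j2: "snd t - y0 - h < h * of_int j"
  proof -
    have "(snd t - y0) / h - 1 < of_int j" unfolding j_def by linarith
    then have "(snd t - y0 - h) / h < of_int j" using h(1) by (simp add: diff_divide_distrib)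
    then show ?thesis using h(1) by (simp add: pos_divide_less_eq mult.commute)
  qed
  define g where "g = (x0 + h * of_int i, y0 + h * of_int j)"
  have gt: "pleq g t" unfolding g_def pleq_def using i1 j1 by simp
  have "g \<in> Tset" unfolding g_def Tset_def using i2 j2 h(2) unfolding \<delta>_def by simp
  then have "g \<in> D" using D_down[OF t _ gt] by simp
  moreover have "ongrid h g" unfolding g_def ongrid_def by blast
  ultimately have "g \<in> Sg (hh n)" unfolding Sg_def h_def by simp
  then show ?thesis using gt by blast
qed

definition "mf t = (SOME z. \<exists>n g. g \<in> Sg (hh n) \<and> pleq g t \<and> z = F g t (mm n g))"

lemma SgD: "g \<in> Sg h \<Longrightarrow> g \<in> D" unfolding Sg_def by simp

lemma mm_V: "g \<in> Sg (hh n) \<Longrightarrow> mm n g \<in> V g"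
  using mm_ok[of n] unfolding comp_def Kill_def by blast

lemma uniq:
  assumes t: "t \<in> D" and g: "g \<in> Sg (hh n)" "pleq g t" and g': "g' \<in> Sg (hh n')" "pleq g' t"
  shows "F g t (mm n g) = F g' t (mm n' g')"
proof -
  define N where "N = max n n'"
  have gN: "g \<in> Sg (hh N)" using Sg_mono[of n N] g(1) unfolding N_def by auto
  have g'N: "g' \<in> Sg (hh N)" using Sg_mono[of n' N] g'(1) unfolding N_def by auto
  have e1: "mm N g = mm n g" using mm_ext[of n N g] g(1) unfolding N_def by simp
  have e2: "mm N g' = mm n' g'" using mm_ext[of n' N g'] g'(1) unfolding N_def by simp
  define j where "j = join g g'"
  have jN: "j \<in> Sg (hh N)" unfolding j_def using Sg_join[OF hh_pos gN g'N] .
  have jt: "pleq j t" unfolding j_def using join_le g(2) g'(2) .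
  have cN: "\<And>s u. s \<in> Sg (hh N) \<Longrightarrow> u \<in> Sg (hh N) \<Longrightarrow> pleq s u \<Longrightarrow> F s u (mm N s) = mm N u"
    using mm_ok[of N] unfolding comp_def by blast
  have gT: "g \<in> Tset" "g' \<in> Tset" using SgD[OF gN] SgD[OF g'N] D_T by auto
  have "F g t (mm N g) = F j t (F g j (mm N g))"
    using Fcomp[OF gT(1) join_ge(1) jt[unfolded j_def] mm_V[OF gN]] unfolding j_def .
  also have "\<dots> = F j t (mm N j)" using cN[OF gN jN] join_ge(1) unfolding j_def by simp
  also have "\<dots> = F j t (F g' j (mm N g'))" using cN[OF g'N jN] join_ge(2) unfolding j_def by simp
  also have "\<dots> = F g' t (mm N g')"
    using Fcomp[OF gT(2) join_ge(2) jt[unfolded j_def] mm_V[OF g'N]] unfolding j_def by simp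
  finally show ?thesis using e1 e2 by simp
qed

lemma mf_eq: assumes t: "t \<in> D" and g: "g \<in> Sg (hh n)" "pleq g t"
  shows "mf t = F g t (mm n g)"
proof -
  have ex: "\<exists>z. \<exists>n g. g \<in> Sg (hh n) \<and> pleq g t \<and> z = F g t (mm n g)" using g by blast
  have "\<exists>n g. g \<in> Sg (hh n) \<and> pleq g t \<and> mf t = F g t (mm n g)"
    unfolding mf_def using someI_ex[OF ex] .
  then obtain n' g' where g': "g' \<in> Sg (hh n')" "pleq g' t" "mf t = F g' t (mm n' g')" by blast
  show ?thesis using uniq[OF t g'(1,2) g] g'(3) by simp
qed

lemma mf_a: "mf a = ee"
  using mf_eq[OF a_D a_Sg[of "hh 0"] pleq_refl] mm_ok[of 0] Fid[OF aT] ee(1) unfolding Kill_def by simp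

lemma mf_K: assumes t: "t \<in> D" shows "mf t \<in> KK t"
proof -
  obtain n g where g: "g \<in> Sg (hh n)" "pleq g t" using cover[OF t] by blast
  have "mm n g \<in> KK g" using mm_ok[of n] g(1) unfolding comp_def by blast
  then show ?thesis using mf_eq[OF t g] push_Kill[OF D_T[OF SgD[OF g(1)]] _ g(2)] by simp
qed

lemma mf_comp: assumes s: "s \<in> D" and t: "t \<in> D" and st: "pleq s t" shows "F s t (mf s) = mf t"
proof -
  obtain n g where g: "g \<in> Sg (hh n)" "pleq g s" using cover[OF s] by blast
  have gt: "pleq g t" using pleq_trans[OF g(2) st] .
  have "F s t (mf s) = F s t (F g s (mm n g))" using mf_eq[OF s g] by simp
  also have "\<dots> = F g t (mm n g)" using Fcomp[OF D_T[OF SgD[OF g(1)]] g(2) st mm_V[OF g(1)]] by simp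
  also have "\<dots> = mf t" using mf_eq[OF t g(1) gt] by simp
  finally show ?thesis .
qed

lemma mf_V: "t \<in> D \<Longrightarrow> mf t \<in> V t" using mf_K unfolding Kill_def by blast

lemma mf_nz: assumes t: "t \<in> D" shows "mf t \<noteq> 0"
proof
  assume m0: "mf t = 0"
  define j where "j = join t a"
  have jD: "j \<in> D" unfolding j_def using D_join[OF t a_D] .
  have "F t j (mf t) = mf j" using mf_comp[OF t jD] join_ge(1) unfolding j_def by simp
  moreover have "F a j (mf a) = mf j" using mf_comp[OF a_D jD] join_ge(2) unfolding j_def by simp
  ultimately have "F a j ee = 0" using m0 mf_a F0[OF D_T[OF t] join_ge(1)] unfolding j_def by simp
  moreover have "F a j ee \<noteq> 0"
  proof -
    have "fst j \<in> J1s" "snd j \<in> J2s" using jD unfolding D_def by auto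
    moreover have "x0 \<le> fst j" "y0 \<le> snd j" unfolding j_def join_def by auto
    ultimately show ?thesis using survival[OF ee, of "fst j" "snd j"] by simp
  qed
  ultimately show False by simp
qed

lemma mf_out: assumes s: "s \<in> D" and st: "pleq s t" and t: "t \<notin> D" shows "F s t (mf s) = 0"
  using out_zero[OF D_T[OF s] mf_K[OF s] st t] .

definition "\<alpha>s = (SOME \<alpha>::nat \<Rightarrow> real. (\<forall>n. \<alpha> n \<in> J1s) \<and> \<alpha> 0 = x0 \<and> mono \<alpha> \<and> (\<forall>p\<in>J1s. \<exists>n. p \<le> \<alpha> n))"
definition "\<beta>s = (SOME \<alpha>::nat \<Rightarrow> real. (\<forall>n. \<alpha> n \<in> J2s) \<and> \<alpha> 0 = y0 \<and> mono \<alpha> \<and> (\<forall>p\<in>J2s. \<exists>n. p \<le> \<alpha> n))"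

lemma \<alpha>s: "(\<forall>n. \<alpha>s n \<in> J1s) \<and> \<alpha>s 0 = x0 \<and> mono \<alpha>s \<and> (\<forall>p\<in>J1s. \<exists>n. p \<le> \<alpha>s n)"
  unfolding \<alpha>s_def using someI_ex[OF CH[OF J1s_props(1,2,3)]] .
lemma \<beta>s: "(\<forall>n. \<beta>s n \<in> J2s) \<and> \<beta>s 0 = y0 \<and> mono \<beta>s \<and> (\<forall>p\<in>J2s. \<exists>n. p \<le> \<beta>s n)"
  unfolding \<beta>s_def using someI_ex[OF CH[OF J2s_props(1,2,3)]] .

definition "w n = (\<alpha>s n, \<beta>s n)"

lemma w0: "w 0 = a" using \<alpha>s \<beta>s unfolding w_def by simp
lemma w_mono: "n \<le> m \<Longrightarrow> pleq (w n) (w m)"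
  using \<alpha>s \<beta>s unfolding w_def pleq_def mono_def by simp
lemma wD: "w n \<in> D"
proof -
  have "pleq a (w n)" using w_mono[of 0 n] w0 by simp
  then have "w n \<in> Tset" using T_up[OF aT] by blast
  then show ?thesis using \<alpha>s \<beta>s unfolding D_def w_def by simp
qed
lemma wT: "w n \<in> Tset" using wD D_T by blast
lemma w_cof: assumes t: "t \<in> D" shows "\<exists>n. pleq t (w n)"
proof -
  obtain n1 where n1: "fst t \<le> \<alpha>s n1" using \<alpha>s t unfolding D_def by blast
  obtain n2 where n2: "snd t \<le> \<beta>s n2" using \<beta>s t unfolding D_def by blast
  have "\<alpha>s n1 \<le> \<alpha>s (max n1 n2)" "\<beta>s n2 \<le> \<beta>s (max n1 n2)" using \<alpha>s \<beta>s unfolding mono_def by auto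
  then have "pleq t (w (max n1 n2))" using n1 n2 unfolding w_def pleq_def by simp
  then show ?thesis by blast
qed

definition "Z n = {x \<in> V (w n). \<exists>m\<ge>n. F (w n) (w m) x = 0}"

lemma Z_sub: "vs.subspace (Z n)"
proof (rule vs.subspaceI)
  show "0 \<in> Z n" unfolding Z_def using vs.subspace_0[OF Vsub[OF wT]] F0[OF wT pleq_refl] by auto
next
  fix x y assume x: "x \<in> Z n" and y: "y \<in> Z n"
  obtain m1 where m1: "m1 \<ge> n" "F (w n) (w m1) x = 0" "x \<in> V (w n)" using x unfolding Z_def by blast
  obtain m2 where m2: "m2 \<ge> n" "F (w n) (w m2) y = 0" "y \<in> V (w n)" using y unfolding Z_def by blast
  define M where "M = max m1 m2"
  have k: "F (w n) (w M) u = 0" if "u \<in> V (w n)" "m \<ge> n" "F (w n) (w m) u = 0" "m \<le> M" for u m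
  proof -
    have "F (w n) (w M) u = F (w m) (w M) (F (w n) (w m) u)"
      using Fcomp[OF wT w_mono[OF that(2)] w_mono[OF that(4)] that(1)] .
    then show ?thesis using that(3) F0[OF wT w_mono[OF that(4)]] by simp
  qed
  have "F (w n) (w M) x = 0" "F (w n) (w M) y = 0" using k m1 m2 unfolding M_def by auto
  then have "F (w n) (w M) (x + y) = 0" using Fadd[OF wT w_mono[of n M] m1(3) m2(3)] m1(1) unfolding M_def by simp
  moreover have "x + y \<in> V (w n)" using vs.subspace_add[OF Vsub[OF wT] m1(3) m2(3)] .
  moreover have "M \<ge> n" using m1(1) unfolding M_def by simp
  ultimately show "x + y \<in> Z n" unfolding Z_def by blast
next
  fix c x assume x: "x \<in> Z n"
  obtain m1 where m1: "m1 \<ge> n" "F (w n) (w m1) x = 0" "x \<in> V (w n)" using x unfolding Z_def by blast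
  have "F (w n) (w m1) (scale c x) = 0" using Fscale[OF wT w_mono[OF m1(1)] m1(3)] m1(2) by simp
  moreover have "scale c x \<in> V (w n)" using vs.subspace_scale[OF Vsub[OF wT] m1(3)] .
  ultimately show "scale c x \<in> Z n" unfolding Z_def using m1(1) by blast
qed

lemma Z_pre: assumes x: "x \<in> V (w n)" and z: "F (w n) (w (Suc n)) x \<in> Z (Suc n)" shows "x \<in> Z n"
proof -
  obtain m where m: "m \<ge> Suc n" "F (w (Suc n)) (w m) (F (w n) (w (Suc n)) x) = 0" using z unfolding Z_def by blast
  have "F (w n) (w m) x = 0" using Fcomp[OF wT w_mono[of n "Suc n"] w_mono[OF m(1)] x] m(2) by simp
  moreover have "m \<ge> n" using m(1) by simp
  ultimately show ?thesis unfolding Z_def using x by blast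
qed

lemma ee_Z: "ee \<notin> Z 0"
proof
  assume "ee \<in> Z 0"
  then obtain m where m: "F a (w m) ee = 0" unfolding Z_def w0 by blast
  have "F a (w m) ee \<noteq> 0"
    using survival[OF ee, of "\<alpha>s m" "\<beta>s m"] \<alpha>s \<beta>s w_mono[of 0 m] w0 unfolding w_def pleq_def by simp
  then show False using m by simp
qed

primrec gg :: "nat \<Rightarrow> 'v \<Rightarrow> 'k" where
  "gg 0 = (SOME g. Vector_Spaces.linear scale (*) g \<and> g ee = 1 \<and> (\<forall>z\<in>Z 0. g z = 0))"
| "gg (Suc n) = (SOME g. Vector_Spaces.linear scale (*) g \<and> (\<forall>x\<in>V (w n). g (F (w n) (w (Suc n)) x) = gg n x)
      \<and> (\<forall>z\<in>Z (Suc n). g z = 0))"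

lemma gg_ok: "Vector_Spaces.linear scale (*) (gg n) \<and> (\<forall>z\<in>Z n. gg n z = 0)"
  and gg_0: "gg 0 ee = 1"
  and gg_step: "\<forall>x\<in>V (w n). gg (Suc n) (F (w n) (w (Suc n)) x) = gg n x"
proof -
  have b: "Vector_Spaces.linear scale (*) (gg 0) \<and> gg 0 ee = 1 \<and> (\<forall>z\<in>Z 0. gg 0 z = 0)"
    unfolding gg.simps using someI_ex[OF L1[OF Z_sub ee_Z]] .
  have s: "Vector_Spaces.linear scale (*) (gg (Suc n)) \<and> (\<forall>x\<in>V (w n). gg (Suc n) (F (w n) (w (Suc n)) x) = gg n x)
      \<and> (\<forall>z\<in>Z (Suc n). gg (Suc n) z = 0)" if ih: "Vector_Spaces.linear scale (*) (gg n) \<and> (\<forall>z\<in>Z n. gg n z = 0)" for n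
  proof -
    have gz: "\<And>x. x \<in> V (w n) \<Longrightarrow> F (w n) (w (Suc n)) x \<in> Z (Suc n) \<Longrightarrow> gg n x = 0"
      using Z_pre ih by blast
    have ex: "\<exists>g. Vector_Spaces.linear scale (*) g \<and> (\<forall>x\<in>V (w n). g (F (w n) (w (Suc n)) x) = gg n x)
      \<and> (\<forall>z\<in>Z (Suc n). g z = 0)"
      using L2[OF Vsub[OF wT] Z_sub Flin[OF wT w_mono] conjunct1[OF ih] gz] by simp
    show ?thesis unfolding gg.simps using someI_ex[OF ex] .
  qed
  have all: "Vector_Spaces.linear scale (*) (gg n) \<and> (\<forall>z\<in>Z n. gg n z = 0)" for n
  proof (induction n)
    case 0 then show ?case using b by simp
  next
    case (Suc n) then show ?case using s by blast
  qed
  show "Vector_Spaces.linear scale (*) (gg n) \<and> (\<forall>z\<in>Z n. gg n z = 0)" using all .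
  show "gg 0 ee = 1" using b by simp
  show "\<forall>x\<in>V (w n). gg (Suc n) (F (w n) (w (Suc n)) x) = gg n x" using s[OF all] by blast
qed

lemma gg_chain: "n \<le> N \<Longrightarrow> x \<in> V (w n) \<Longrightarrow> gg N (F (w n) (w N) x) = gg n x"
proof (induction N)
  case 0 then show ?case using Fid[OF wT] by simp
next
  case (Suc N)
  show ?case
  proof (cases "n = Suc N")
    case True then show ?thesis using Fid[OF wT Suc.prems(2)] by simp
  next
    case False
    then have nN: "n \<le> N" using Suc.prems by simp
    have "F (w n) (w (Suc N)) x = F (w N) (w (Suc N)) (F (w n) (w N) x)"
      using Fcomp[OF wT w_mono[OF nN] w_mono[of N "Suc N"] Suc.prems(2)] by simp
    moreover have "F (w n) (w N) x \<in> V (w N)" using Fsub[OF wT w_mono[OF nN] Suc.prems(2)] .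
    ultimately have "gg (Suc N) (F (w n) (w (Suc N)) x) = gg N (F (w n) (w N) x)"
      using gg_step[of N] by simp
    then show ?thesis using Suc.IH[OF nN Suc.prems(2)] by simp
  qed
qed

definition "ff t x = gg (LEAST n. pleq t (w n)) (F t (w (LEAST n. pleq t (w n))) x)"

lemma ff_eq: assumes t: "t \<in> D" and n: "pleq t (w n)" and x: "x \<in> V t"
  shows "ff t x = gg n (F t (w n) x)"
proof -
  define n0 where "n0 = (LEAST n. pleq t (w n))"
  have n0: "pleq t (w n0)" "n0 \<le> n" unfolding n0_def using LeastI[of "\<lambda>n. pleq t (w n)" n] Least_le[of "\<lambda>n. pleq t (w n)" n] n by auto
  have "gg n (F t (w n) x) = gg n (F (w n0) (w n) (F t (w n0) x))"
    using Fcomp[OF D_T[OF t] n0(1) w_mono[OF n0(2)] x] by simp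
  also have "\<dots> = gg n0 (F t (w n0) x)" using gg_chain[OF n0(2) Fsub[OF D_T[OF t] n0(1) x]] .
  finally show ?thesis unfolding ff_def n0_def by simp
qed

lemma ff_comp: assumes s: "s \<in> D" and t: "t \<in> D" and st: "pleq s t" and x: "x \<in> V s"
  shows "ff t (F s t x) = ff s x"
proof -
  obtain n where n: "pleq t (w n)" using w_cof[OF t] by blast
  have sn: "pleq s (w n)" using pleq_trans[OF st n] .
  have "ff t (F s t x) = gg n (F t (w n) (F s t x))" using ff_eq[OF t n Fsub[OF D_T[OF s] st x]] .
  also have "\<dots> = gg n (F s (w n) x)" using Fcomp[OF D_T[OF s] st n x] by simp
  also have "\<dots> = ff s x" using ff_eq[OF s sn x] by simp
  finally show ?thesis .
qed

lemma ff_m: assumes t: "t \<in> D" shows "ff t (mf t) = 1"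
proof -
  obtain n where n: "pleq t (w n)" using w_cof[OF t] by blast
  have "ff t (mf t) = gg n (F t (w n) (mf t))" using ff_eq[OF t n mf_V[OF t]] .
  also have "F t (w n) (mf t) = mf (w n)" using mf_comp[OF t wD n] .
  also have "mf (w n) = F a (w n) ee" using mf_comp[OF a_D wD, of n] w_mono[of 0 n] w0 mf_a by simp
  also have "gg n (F a (w n) ee) = gg 0 ee" using gg_chain[of 0 n ee] w0 ee(1) unfolding Kill_def by simp
  finally show ?thesis using gg_0 by simp
qed

lemma ff_lin: assumes t: "t \<in> D" shows "lin_on scale (*) (V t) (ff t)"
proof -
  obtain n where n: "pleq t (w n)" using w_cof[OF t] by blast
  have lg: "Vector_Spaces.linear scale (*) (gg n)" using gg_ok by blast
  show ?thesis unfolding lin_on_def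
  proof (intro conjI ballI allI)
    fix x y assume x: "x \<in> V t" and y: "y \<in> V t"
    have "x + y \<in> V t" using vs.subspace_add[OF Vsub[OF D_T[OF t]] x y] .
    then show "ff t (x + y) = ff t x + ff t y"
      using ff_eq[OF t n] x y Fadd[OF D_T[OF t] n x y] lin_add[OF lg] by simp
  next
    fix c x assume x: "x \<in> V t"
    have "scale c x \<in> V t" using vs.subspace_scale[OF Vsub[OF D_T[OF t]] x] .
    then show "ff t (scale c x) = c * ff t x"
      using ff_eq[OF t n] x Fscale[OF D_T[OF t] n x] lin_scale[OF lg] by simp
  qed
qed

lemma ff_0: "t \<in> D \<Longrightarrow> ff t 0 = 0"
  using ff_lin[of t] vs.subspace_0[OF Vsub[OF D_T]] unfolding lin_on_def
  by (metis mult_zero_left vs.scale_zero_left)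

lemma ff_diff: assumes t: "t \<in> D" and x: "x \<in> V t" and y: "y \<in> V t" shows "ff t (x - y) = ff t x - ff t y"
proof -
  have d: "x - y \<in> V t" using vs.subspace_diff[OF Vsub[OF D_T[OF t]] x y] .
  have "ff t x = ff t ((x - y) + y)" by simp
  also have "\<dots> = ff t (x - y) + ff t y" using ff_lin[OF t] d y unfolding lin_on_def by blast
  finally show ?thesis by simp
qed

lemma ff_scale: "t \<in> D \<Longrightarrow> x \<in> V t \<Longrightarrow> ff t (scale c x) = c * ff t x"
  using ff_lin unfolding lin_on_def by blast

lemma main:
  assumes ind: "indecomposable scale Tset V F"
  shows "\<exists>J. block_db J \<and> pmod_iso Tset scale V F ((\<lambda>a b. a * b) :: 'k \<Rightarrow> 'k \<Rightarrow> 'k)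
             (kB_space (J \<inter> Tset)) (kB_map (J \<inter> Tset))"
proof -
  define W1 where "W1 t = (if t \<in> D then vs.span {mf t} else {0})" for t
  define W2 where "W2 t = (if t \<in> D then {z \<in> V t. ff t z = 0} else V t)" for t
  have line: "x \<in> vs.span {mf t} \<longleftrightarrow> (\<exists>c. x = scale c (mf t))" for x t
    using vs.span_singleton[of "mf t"] by auto
  have s1: "submod Tset scale V F W1" unfolding submod_def
  proof (intro conjI ballI impI)
    fix t assume t: "t \<in> Tset"
    show "vs.subspace (W1 t)" unfolding W1_def by simp
    show "W1 t \<subseteq> V t" unfolding W1_def
      using vs.span_minimal[of "{mf t}" "V t"] mf_V Vsub[OF t] vs.subspace_0[OF Vsub[OF t]] by auto
  next
    fix s t assume s: "s \<in> Tset" and t: "t \<in> Tset" and st: "pleq s t"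
    show "F s t ` W1 s \<subseteq> W1 t"
    proof
      fix y assume "y \<in> F s t ` W1 s"
      then obtain x where x: "x \<in> W1 s" "y = F s t x" by blast
      show "y \<in> W1 t"
      proof (cases "s \<in> D")
        case True
        then obtain c where c: "x = scale c (mf s)" using x(1) line unfolding W1_def by auto
        have y: "y = scale c (F s t (mf s))" using x(2) c Fscale[OF s st mf_V[OF True]] by simp
        show ?thesis
        proof (cases "t \<in> D")
          case True
          then show ?thesis using y mf_comp[OF \<open>s \<in> D\<close> True st] line unfolding W1_def by auto
        next
          case False
          then show ?thesis using y mf_out[OF \<open>s \<in> D\<close> st False] unfolding W1_def
            by (simp add: vs.span_zero)
        qed
      next
        case False
        then have "x = 0" using x(1) unfolding W1_def by simp
        then show ?thesis using x(2) F0[OF s st] unfolding W1_def by (simp add: vs.span_zero)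
      qed
    qed
  qed
  have s2: "submod Tset scale V F W2" unfolding submod_def
  proof (intro conjI ballI impI)
    fix t assume t: "t \<in> Tset"
    show "vs.subspace (W2 t)"
    proof (cases "t \<in> D")
      case True
      show ?thesis unfolding W2_def using True
      proof (simp, intro vs.subspaceI)
        show "0 \<in> {z \<in> V t. ff t z = 0}" using vs.subspace_0[OF Vsub[OF t]] ff_0[OF True] by simp
        show "x + y \<in> {z \<in> V t. ff t z = 0}" if "x \<in> {z \<in> V t. ff t z = 0}" "y \<in> {z \<in> V t. ff t z = 0}" for x y
          using that vs.subspace_add[OF Vsub[OF t]] ff_lin[OF True] unfolding lin_on_def by auto
        show "scale c x \<in> {z \<in> V t. ff t z = 0}" if "x \<in> {z \<in> V t. ff t z = 0}" for c x
          using that vs.subspace_scale[OF Vsub[OF t]] ff_scale[OF True] by auto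
      qed
    next
      case False then show ?thesis unfolding W2_def using Vsub[OF t] by simp
    qed
    show "W2 t \<subseteq> V t" unfolding W2_def by auto
  next
    fix s t assume s: "s \<in> Tset" and t: "t \<in> Tset" and st: "pleq s t"
    show "F s t ` W2 s \<subseteq> W2 t"
    proof
      fix y assume "y \<in> F s t ` W2 s"
      then obtain x where x: "x \<in> W2 s" "y = F s t x" by blast
      have xV: "x \<in> V s" using x(1) unfolding W2_def by (auto split: if_splits)
      show "y \<in> W2 t"
      proof (cases "t \<in> D")
        case True
        have sD: "s \<in> D" using D_down[OF True s st] .
        then have "ff s x = 0" using x(1) unfolding W2_def by simp
        then show ?thesis using True x(2) ff_comp[OF sD True st xV] Fsub[OF s st xV] unfolding W2_def by simp
      next
        case False then show ?thesis using x(2) Fsub[OF s st xV] unfolding W2_def by simp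
      qed
    qed
  qed
  have ds: "\<forall>t\<in>Tset. W1 t \<inter> W2 t = {0} \<and> {u + w | u w. u \<in> W1 t \<and> w \<in> W2 t} = V t"
  proof
    fix t assume t: "t \<in> Tset"
    have z0: "0 \<in> V t" using vs.subspace_0[OF Vsub[OF t]] .
    show "W1 t \<inter> W2 t = {0} \<and> {u + w | u w. u \<in> W1 t \<and> w \<in> W2 t} = V t"
    proof (cases "t \<in> D")
      case True
      have i: "W1 t \<inter> W2 t = {0}"
      proof
        show "W1 t \<inter> W2 t \<subseteq> {0}"
        proof
          fix x assume x: "x \<in> W1 t \<inter> W2 t"
          then obtain c where c: "x = scale c (mf t)" using True line unfolding W1_def by auto
          have "ff t x = 0" using x True unfolding W2_def by simp
          then have "c = 0" using c ff_scale[OF True mf_V[OF True]] ff_m[OF True] by simp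
          then show "x \<in> {0}" using c by simp
        qed
        show "{0} \<subseteq> W1 t \<inter> W2 t" using True z0 ff_0[OF True] unfolding W1_def W2_def
          by (simp add: vs.span_zero)
      qed
      have u: "{u + w | u w. u \<in> W1 t \<and> w \<in> W2 t} = V t"
      proof
        show "{u + w | u w. u \<in> W1 t \<and> w \<in> W2 t} \<subseteq> V t"
        proof
          fix y assume "y \<in> {u + w | u w. u \<in> W1 t \<and> w \<in> W2 t}"
          then obtain u w where uw: "y = u + w" "u \<in> W1 t" "w \<in> W2 t" by blast
          obtain c where "u = scale c (mf t)" using uw(2) True line unfolding W1_def by auto
          then have "u \<in> V t" using vs.subspace_scale[OF Vsub[OF t] mf_V[OF True]] by simp
          moreover have "w \<in> V t" using uw(3) True unfolding W2_def by simp
          ultimately show "y \<in> V t" using uw(1) vs.subspace_add[OF Vsub[OF t]] by simp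
        qed
        show "V t \<subseteq> {u + w | u w. u \<in> W1 t \<and> w \<in> W2 t}"
        proof
          fix z assume z: "z \<in> V t"
          define u where "u = scale (ff t z) (mf t)"
          have uV: "u \<in> V t" unfolding u_def using vs.subspace_scale[OF Vsub[OF t] mf_V[OF True]] .
          have u1: "u \<in> W1 t" unfolding W1_def u_def using True line by auto
          have "ff t (z - u) = 0"
            using ff_diff[OF True z uV] ff_scale[OF True mf_V[OF True]] ff_m[OF True] unfolding u_def by simp
          then have "z - u \<in> W2 t" unfolding W2_def using True vs.subspace_diff[OF Vsub[OF t] z uV] by simp
          moreover have "z = u + (z - u)" by simp
          ultimately show "z \<in> {u + w | u w. u \<in> W1 t \<and> w \<in> W2 t}" using u1 by blast
        qed
      qed
      show ?thesis using i u by simp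
    next
      case False
      have "{u + w | u w. u \<in> W1 t \<and> w \<in> W2 t} = V t" using False unfolding W1_def W2_def by auto
      then show ?thesis using False z0 unfolding W1_def W2_def by auto
    qed
  qed
  have "(\<forall>t\<in>Tset. W1 t = {0}) \<or> (\<forall>t\<in>Tset. W2 t = {0})"
    using ind s1 s2 ds unfolding indecomposable_def by blast
  moreover have "W1 a \<noteq> {0}"
  proof
    assume "W1 a = {0}"
    moreover have "mf a \<in> W1 a" unfolding W1_def using a_D vs.span_base[of "mf a" "{mf a}"] by simp
    ultimately show False using mf_a ee(2) by simp
  qed
  ultimately have W20: "\<forall>t\<in>Tset. W2 t = {0}" using aT by blast
  have Vout: "V t = {0}" if "t \<in> Tset" "t \<notin> D" for t
  proof -
    have "W2 t = {0}" using W20 that(1) by blast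
    then show ?thesis using that(2) unfolding W2_def by simp
  qed
  have ffinj: "z = 0" if "t \<in> D" "z \<in> V t" "ff t z = 0" for t z
  proof -
    have "z \<in> W2 t" unfolding W2_def using that by simp
    then show ?thesis using W20 D_T[OF that(1)] by blast
  qed
  define J where "J = J1s \<times> J2s"
  have JT: "J \<inter> Tset = D" unfolding J_def D_def by auto
  have bJ: "block_db J" unfolding block_db_def J_def using J1s_props(1,2) J2s_props(1,2) by blast
  define \<phi> where "\<phi> t z = (if t \<in> D then ff t z else (0::'k))" for t z
  have iso: "pmod_iso Tset scale V F ((\<lambda>a b. a * b) :: 'k \<Rightarrow> 'k \<Rightarrow> 'k) (kB_space D) (kB_map D)"
    unfolding pmod_iso_def
  proof (intro exI[of _ \<phi>] conjI ballI impI)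
    fix t assume t: "t \<in> Tset"
    show "lin_on scale (\<lambda>a b. a * b) (V t) (\<phi> t)"
    proof (cases "t \<in> D")
      case True then show ?thesis using ff_lin[OF True] unfolding \<phi>_def lin_on_def by simp
    next
      case False then show ?thesis unfolding \<phi>_def lin_on_def by simp
    qed
    show "bij_betw (\<phi> t) (V t) (kB_space D t)"
    proof (cases "t \<in> D")
      case True
      have inj: "inj_on (\<phi> t) (V t)"
      proof (rule inj_onI)
        fix x y assume x: "x \<in> V t" and y: "y \<in> V t" and e: "\<phi> t x = \<phi> t y"
        have "ff t (x - y) = 0" using e ff_diff[OF True x y] True unfolding \<phi>_def by simp
        then have "x - y = 0" using ffinj[OF True vs.subspace_diff[OF Vsub[OF t] x y]] by simp
        then show "x = y" by simp
      qed
      have "\<phi> t ` V t = UNIV"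
      proof (intro set_eqI iffI)
        fix c :: 'k
        have "scale c (mf t) \<in> V t" using vs.subspace_scale[OF Vsub[OF t] mf_V[OF True]] .
        moreover have "\<phi> t (scale c (mf t)) = c"
          using ff_scale[OF True mf_V[OF True]] ff_m[OF True] True unfolding \<phi>_def by simp
        ultimately show "c \<in> \<phi> t ` V t" by (metis image_eqI)
      qed simp
      then show ?thesis using inj True unfolding bij_betw_def kB_space_def by simp
    next
      case False
      then show ?thesis using Vout[OF t False] unfolding bij_betw_def kB_space_def \<phi>_def by simp
    qed
  next
    fix s t x assume s: "s \<in> Tset" and t: "t \<in> Tset" and st: "pleq s t" and x: "x \<in> V s"
    show "\<phi> t (F s t x) = kB_map D s t (\<phi> s x)"
    proof (cases "s \<in> D")
      case True
      show ?thesis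
      proof (cases "t \<in> D")
        case True
        then show ?thesis using ff_comp[OF \<open>s \<in> D\<close> True st x] \<open>s \<in> D\<close> unfolding \<phi>_def kB_map_def by simp
      next
        case False then show ?thesis unfolding \<phi>_def kB_map_def by simp
      qed
    next
      case False
      then have "x = 0" using Vout[OF s False] x by simp
      then show ?thesis using False F0[OF s st] ff_0 unfolding \<phi>_def kB_map_def by simp
    qed
  qed
  show ?thesis using bJ iso JT by metis
qed

end

theorem lemma5p11:
  fixes scale :: "'k::field \<Rightarrow> 'v::ab_group_add \<Rightarrow> 'v"
    and V :: "real \<times> real \<Rightarrow> 'v set"
    and F :: "real \<times> real \<Rightarrow> real \<times> real \<Rightarrow> 'v \<Rightarrow> 'v"
  assumes "pmod scale Tset V F"
    and "pfd scale Tset V"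
    and "middle_exact Tset V F"
    and "indecomposable scale Tset V F"
    and "x \<le> x'" and "y \<le> y'"
    and "(x, y) \<in> Tset" and "(x, y') \<in> Tset" and "(x', y) \<in> Tset" and "(x', y') \<in> Tset"
    and "\<exists>v\<in>V (x, y). v \<noteq> 0 \<and> F (x, y) (x, y') v = 0 \<and> F (x, y) (x', y) v = 0"
  shows "\<exists>J. block_db J \<and>
           pmod_iso Tset scale V F ((\<lambda>a b. a * b) :: 'k \<Rightarrow> 'k \<Rightarrow> 'k)
             (kB_space (J \<inter> Tset)) (kB_map (J \<inter> Tset))"
proof -
  obtain v where v: "v \<in> V (x, y)" "v \<noteq> 0" "F (x, y) (x, y') v = 0" "F (x, y) (x', y) v = 0"
    using assms(11) by blast
  interpret c2: ctx2 scale V F x y x' y' v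
    by (unfold_locales) (use assms v in auto)
  show ?thesis using c2.main[OF assms(4)] .
qed

end
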